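(* Let $\gamma_1,\gamma_2,\gamma_3,\gamma_4>0$. The embedded Markov chain of the Schlögl model, i.e. the Markov chain on $\mathbb{N}_0$ with transition probabilities \[ P(x,x+1)=\frac{\gamma_1+\gamma_3x(x-1)}{\mu(x)},\qquad P(x,x-1)=\frac{\gamma_2x+\gamma_4x(x-1)(x-2)}{\mu(x)}, \] where $\mu(x)=\gamma_1+\gamma_2x+\gamma_3x(x-1)+\gamma_4x(x-1)(x-2)$, admits a unique stationary distribution. Consequently, the associated RDS $(\theta,\varphi)$ described in the context admits a unique weak attractor.
   Context: Noise space $\mathcal{Q}=\{q=(q_n)_{n\in\mathbb{Z}}: q_n\in[0,1]\}$ with product Borel $\sigma$-algebra and $\mathbb{P}=\lambda^{\mathbb{Z}}$ ($\lambda$ Lebesgue on $[0,1]$), invertible shift $(\theta q)_n=q_{n+1}$. With propensities $\alpha_1(x)=\gamma_1$, $\alpha_2(x)=\gamma_2x$, $\alpha_3(x)=\gamma_3x(x-1)$, $\alpha_4(x)=\gamma_4x(x-1)(x-2)$ and state changes $\nu_1=\nu_3=1$, $\nu_2=\nu_4=-1$, let $\kappa(x,q_0)$ be the smallest $k$ with $\sum_{j\le k}\alpha_j(x)>q_0\sum_{j=1}^4\alpha_j(x)$, and $f_q(x)=x+\nu_{\kappa(x,q_0)}$; $\varphi^0_q=\mathrm{id}$, $\varphi^n_q=f_{\theta^{n-1}q}\circ\cdots\circ f_q$. With $d(x,B)=\inf_{y\in B}|x-y|$ and $\mathrm{dist}(A,B)=\sup_{x\in A}d(x,B)$, a weak attractor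 is a map $A:\mathcal{Q}\to\mathcal{P}(\mathbb{N}_0)$ with $q\mapsto d(x,A_q)$ measurable for each $x$, $A_q$ nonempty and finite for all $q$, $\varphi^n_q(A_q)=A_{\theta^nq}$ for all $n\in\mathbb{N}$ $\mathbb{P}$-a.s., and $\mathrm{dist}(\varphi^n_q(B),A_{\theta^nq})\to0$ in probability for every finite $B\subset\mathbb{N}_0$; uniqueness is up to $\mathbb{P}$-a.s. equality. *)

theory Defs
  imports "HOL-Probability.Probability"
begin

text \<open>Rate constants are given as a function g with g 1, g 2, g 3, g 4 the four
  parameters gamma_1 .. gamma_4 (other values are irrelevant).\<close>

definition noise :: "(int \<Rightarrow> real) measure" where
  "noise = PiM UNIV (\<lambda>_::int. restrict_space lborel {0..(1::real)})"

definition shift :: "(int \<Rightarrow> real) \<Rightarrow> (int \<Rightarrow> real)" where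
  "shift q = (\<lambda>n. q (n + 1))"

definition alpha :: "(nat \<Rightarrow> real) \<Rightarrow> nat \<Rightarrow> nat \<Rightarrow> real" where
  "alpha g j x =
     (if j = 1 then g 1
      else if j = 2 then g 2 * real x
      else if j = 3 then g 3 * real x * (real x - 1)
      else if j = 4 then g 4 * real x * (real x - 1) * (real x - 2)
      else 0)"

definition nu :: "nat \<Rightarrow> int" where
  "nu j = (if j = 1 \<or> j = 3 then 1 else -1)"

text \<open>Smallest k in {1..4} with partial sum exceeding q0 times the total; if no such k
  exists (only possible for q0 >= 1, a null event) we use the convention k = 4.\<close>
definition kappa :: "(nat \<Rightarrow> real) \<Rightarrow> nat \<Rightarrow> real \<Rightarrow> nat" where
  "kappa g x q0 =
     (if \<exists>k\<in>{1..4}. (\<Sum>j\<in>{1..k}. alpha g j x) > q0 * (\<Sum>j\<in>{1..4}. alpha g j x)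
      then (LEAST k. k \<in> {1..4} \<and> (\<Sum>j\<in>{1..k}. alpha g j x) > q0 * (\<Sum>j\<in>{1..4}. alpha g j x))
      else 4)"

definition fstep :: "(nat \<Rightarrow> real) \<Rightarrow> (int \<Rightarrow> real) \<Rightarrow> nat \<Rightarrow> nat" where
  "fstep g q x = nat (int x + nu (kappa g x (q 0)))"

primrec phi :: "(nat \<Rightarrow> real) \<Rightarrow> nat \<Rightarrow> (int \<Rightarrow> real) \<Rightarrow> nat \<Rightarrow> nat" where
  "phi g 0 q = id"
| "phi g (Suc n) q = fstep g ((shift ^^ n) q) \<circ> phi g n q"

definition mu :: "(nat \<Rightarrow> real) \<Rightarrow> nat \<Rightarrow> real" where
  "mu g x = g 1 + g 2 * real x + g 3 * real x * (real x - 1)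
            + g 4 * real x * (real x - 1) * (real x - 2)"

definition trans_P :: "(nat \<Rightarrow> real) \<Rightarrow> nat \<Rightarrow> nat \<Rightarrow> real" where
  "trans_P g x y =
     (if y = x + 1 then (g 1 + g 3 * real x * (real x - 1)) / mu g x else 0)
   + (if y + 1 = x then (g 2 * real x + g 4 * real x * (real x - 1) * (real x - 2)) / mu g x else 0)"

definition stationary :: "(nat \<Rightarrow> real) \<Rightarrow> nat pmf \<Rightarrow> bool" where
  "stationary g p \<longleftrightarrow> (\<forall>y. pmf p y = (\<Sum>x. pmf p x * trans_P g x y))"

definition pt_dist :: "nat \<Rightarrow> nat set \<Rightarrow> real" where
  "pt_dist x B = Inf ((\<lambda>y. \<bar>real x - real y\<bar>) ` B)"

text \<open>sup over A of d(x,B); the 0 makes the value 0 for empty A (all values are >= 0).\<close>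
definition set_dist :: "nat set \<Rightarrow> nat set \<Rightarrow> real" where
  "set_dist A B = Sup (insert 0 ((\<lambda>x. pt_dist x B) ` A))"

definition weak_attractor :: "(nat \<Rightarrow> real) \<Rightarrow> ((int \<Rightarrow> real) \<Rightarrow> nat set) \<Rightarrow> bool" where
  "weak_attractor g A \<longleftrightarrow>
     (\<forall>x. (\<lambda>q. pt_dist x (A q)) \<in> borel_measurable noise)
   \<and> (\<forall>q\<in>space noise. A q \<noteq> {} \<and> finite (A q))
   \<and> (AE q in noise. \<forall>n. phi g n q ` A q = A ((shift ^^ n) q))
   \<and> (\<forall>B. finite B \<longrightarrow> (\<forall>\<epsilon>>0.
         (\<forall>n. {q \<in> space noise. set_dist (phi g n q ` B) (A ((shift ^^ n) q)) > \<epsilon>} \<in> sets noise)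
       \<and> (\<lambda>n. measure noise {q \<in> space noise. set_dist (phi g n q ` B) (A ((shift ^^ n) q)) > \<epsilon>})
           \<longlonglongrightarrow> 0))"

end

theory Submission
  imports Defs
begin

lemma sum14: "(\<Sum>j\<in>{1..4::nat}. f j) = f 1 + f 2 + f 3 + f (4::nat)"
  by (simp add: numeral_eq_Suc add.commute add.left_commute)
lemma sum13: "(\<Sum>j\<in>{1..3::nat}. f j) = f 1 + f 2 + f (3::nat)"
  by (simp add: numeral_eq_Suc add.commute add.left_commute)
lemma sum12: "(\<Sum>j\<in>{1..2::nat}. f j) = f 1 + f (2::nat)"
  by (simp add: numeral_eq_Suc add.commute add.left_commute)
lemma sum11: "(\<Sum>j\<in>{1..1::nat}. f j) = f (1::nat)"
  by simp

lemma kappa_eq: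
  "kappa g x u = (let a1 = alpha g 1 x; a2 = alpha g 2 x; a3 = alpha g 3 x; a4 = alpha g 4 x;
      S = a1 + a2 + a3 + a4 in
     if a1 > u * S then 1 else if a1 + a2 > u * S then 2 else if a1 + a2 + a3 > u * S then 3 else 4)"
proof -
  define P where "P k = (k \<in> {1..4::nat} \<and> (\<Sum>j\<in>{1..k}. alpha g j x) > u * (\<Sum>j\<in>{1..4}. alpha g j x))" for k
  have k: "kappa g x u = (if \<exists>k. P k then (LEAST k. P k) else 4)"
    unfolding kappa_def P_def by auto
  have P1: "P 1 = (alpha g 1 x > u * (alpha g 1 x + alpha g 2 x + alpha g 3 x + alpha g 4 x))"
    unfolding P_def sum14 by simp
  have P2: "P 2 = (alpha g 1 x + alpha g 2 x > u * (alpha g 1 x + alpha g 2 x + alpha g 3 x + alpha g 4 x))"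
    unfolding P_def sum14 sum12 by simp
  have P3: "P 3 = (alpha g 1 x + alpha g 2 x + alpha g 3 x > u * (alpha g 1 x + alpha g 2 x + alpha g 3 x + alpha g 4 x))"
    unfolding P_def sum14 sum13 by simp
  have P4: "P 4 = (alpha g 1 x + alpha g 2 x + alpha g 3 x + alpha g 4 x > u * (alpha g 1 x + alpha g 2 x + alpha g 3 x + alpha g 4 x))"
    unfolding P_def sum14 by simp
  have P0: "P k \<Longrightarrow> k \<in> {1,2,3,4}" for k unfolding P_def by auto
  have r: "(LEAST k. P k) = m" if "P m" "\<And>k. k < m \<Longrightarrow> \<not> P k" for m
    by (rule Least_equality) (use that in \<open>auto simp: not_less[symmetric]\<close>)
  show ?thesis
  proof (cases "P 1")
    case True
    have "(LEAST k. P k) = 1" by (rule r) (use True P0[of 0] in auto)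
    then show ?thesis using True P1 by (auto simp: k Let_def)
  next
    case n1: False
    show ?thesis
    proof (cases "P 2")
      case True
      have "(LEAST k. P k) = 2" apply (rule r) using True n1 P0 by (auto simp: less_Suc_eq numeral_eq_Suc)
      then show ?thesis using True n1 P1 P2 by (auto simp: k Let_def)
    next
      case n2: False
      show ?thesis
      proof (cases "P 3")
        case True
        have "(LEAST k. P k) = 3" apply (rule r) using True n1 n2 P0 by (auto simp: less_Suc_eq numeral_eq_Suc)
        then show ?thesis using True n1 n2 P1 P2 P3 by (auto simp: k Let_def)
      next
        case n3: False
        have "(LEAST k. P k) = 4" if "P 4" apply (rule r) using that n1 n2 n3 P0 by (auto simp: less_Suc_eq numeral_eq_Suc)
        moreover have "(\<exists>k. P k) \<longleftrightarrow> P 4" using P0 n1 n2 n3 by auto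
        ultimately show ?thesis using n1 n2 n3 P1 P2 P3 P4 by (auto simp: k Let_def)
      qed
    qed
  qed
qed


definition M0 :: "real measure" where "M0 = restrict_space lborel {0..1}"

lemma noise_M0: "noise = PiM UNIV (\<lambda>_. M0)" unfolding noise_def M0_def ..

lemma prob_M0: "prob_space M0"
  unfolding M0_def by (rule prob_space_restrict_space) auto

lemma space_M0: "space M0 = {0..1}" unfolding M0_def by (simp add: space_restrict_space)

lemma measure_M0: "A \<in> sets borel \<Longrightarrow> A \<subseteq> {0..1} \<Longrightarrow> measure M0 A = measure lborel A"
  unfolding M0_def by (subst measure_restrict_space) auto

lemma M0_sets: "A \<in> sets borel \<Longrightarrow> A \<subseteq> {0..1} \<Longrightarrow> A \<in> sets M0"
  unfolding M0_def by (auto simp: sets_restrict_space)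

definition up :: "(nat \<Rightarrow> real) \<Rightarrow> nat \<Rightarrow> real" where
  "up g x = (g 1 + g 3 * real x * (real x - 1)) / mu g x"
definition dn :: "(nat \<Rightarrow> real) \<Rightarrow> nat \<Rightarrow> real" where
  "dn g x = (g 2 * real x + g 4 * real x * (real x - 1) * (real x - 2)) / mu g x"

lemma trans_P_up: "trans_P g x (Suc x) = up g x"
  unfolding trans_P_def up_def by simp
lemma trans_P_dn: "trans_P g (Suc x) x = dn g (Suc x)"
  unfolding trans_P_def dn_def by simp
lemma trans_P_0: "y \<noteq> Suc x \<Longrightarrow> Suc y \<noteq> x \<Longrightarrow> trans_P g x y = 0"
  unfolding trans_P_def by auto

lemma xx1: "real x * (real x - 1) \<ge> 0"
  by (cases x) auto
lemma xx2: "real x * (real x - 1) * (real x - 2) \<ge> 0"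
  by (cases x; cases "x - 1") (auto simp: of_nat_Suc algebra_simps)

definition stp :: "(nat \<Rightarrow> real) \<Rightarrow> nat \<Rightarrow> real \<Rightarrow> nat" where
  "stp g x u = nat (int x + nu (kappa g x u))"

lemma fstep_stp: "fstep g q x = stp g x (q 0)"
  unfolding fstep_def stp_def ..

lemma stp_eq: "stp g x u = (if kappa g x u \<in> {1,3} then Suc x else x - 1)"
  unfolding stp_def nu_def by auto

locale schl =
  fixes g :: "nat \<Rightarrow> real"
  assumes g1: "g 1 > 0" and g2: "g 2 > 0" and g3: "g 3 > 0" and g4: "g 4 > 0"
begin

lemma alpha_nonneg: "alpha g j x \<ge> 0"
  using g1 g2 g3 g4 xx1[of x] xx2[of x] unfolding alpha_def
  by (auto simp: mult.assoc intro!: mult_nonneg_nonneg)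

lemma mu_alpha: "mu g x = alpha g 1 x + alpha g 2 x + alpha g 3 x + alpha g 4 x"
  unfolding mu_def alpha_def by simp

lemma mu_pos: "mu g x > 0"
  using alpha_nonneg[of 2 x] alpha_nonneg[of 3 x] alpha_nonneg[of 4 x] g1
  unfolding mu_alpha by (simp add: alpha_def)

lemma up_alpha: "up g x = (alpha g 1 x + alpha g 3 x) / mu g x"
  unfolding up_def alpha_def by (simp add: mult.assoc)
lemma dn_alpha: "dn g x = (alpha g 2 x + alpha g 4 x) / mu g x"
  unfolding dn_def alpha_def by (simp add: mult.assoc)

lemma up_dn: "up g x + dn g x = 1"
proof -
  have "up g x + dn g x = (alpha g 1 x + alpha g 3 x + (alpha g 2 x + alpha g 4 x)) / mu g x"
    by (simp add: up_alpha dn_alpha add_divide_distrib)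
  also have "\<dots> = mu g x / mu g x" by (simp add: mu_alpha algebra_simps)
  finally show ?thesis using mu_pos[of x] by simp
qed

lemma up_nonneg: "up g x \<ge> 0"
  using mu_pos[of x] alpha_nonneg unfolding up_alpha by simp
lemma dn_nonneg: "dn g x \<ge> 0"
  using mu_pos[of x] alpha_nonneg unfolding dn_alpha by simp
lemma up_pos: "up g x > 0"
  using mu_pos[of x] alpha_nonneg[of 3 x] g1 unfolding up_alpha by (simp add: alpha_def)
lemma dn_pos: "x > 0 \<Longrightarrow> dn g x > 0"
proof -
  assume x: "x > 0"
  have "g 2 * real x > 0" using g2 x by simp
  then have "g 2 * real x + g 4 * real x * (real x - 1) * (real x - 2) > 0"
    using xx2[of x] g4 by (smt (verit) mult.assoc mult_nonneg_nonneg)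
  then show ?thesis unfolding dn_def using mu_pos[of x] by simp
qed
lemma up0: "up g 0 = 1"
  unfolding up_def mu_def using g1 by simp

lemma stp_lt1: "u < 1 \<Longrightarrow> stp g x u = Suc x \<or> (x > 0 \<and> stp g x u = x - 1)"
proof -
  assume u: "u < 1"
  have "x = 0 \<Longrightarrow> kappa g x u = 1"
    using u g1 unfolding kappa_eq by (simp add: alpha_def Let_def)
  then show ?thesis unfolding stp_eq by auto
qed

lemma stp0: "u < 1 \<Longrightarrow> stp g 0 u = 1"
  using stp_lt1[of u 0] by auto

lemma up_set: "{u \<in> {0..<1}. kappa g x u \<in> {1,3}} =
   {0..<alpha g 1 x / mu g x} \<union> {(alpha g 1 x + alpha g 2 x) / mu g x ..< (alpha g 1 x + alpha g 2 x + alpha g 3 x) / mu g x}"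
proof -
  define a1 where "a1 = alpha g 1 x"
  define a2 where "a2 = alpha g 2 x"
  define a3 where "a3 = alpha g 3 x"
  define a4 where "a4 = alpha g 4 x"
  define S where "S = mu g x"
  have S: "S = a1 + a2 + a3 + a4" "S > 0" unfolding S_def a1_def a2_def a3_def a4_def using mu_alpha mu_pos by auto
  have nn: "a1 \<ge> 0" "a2 \<ge> 0" "a3 \<ge> 0" "a4 \<ge> 0" unfolding a1_def a2_def a3_def a4_def using alpha_nonneg by auto
  have k: "kappa g x u = (if a1 > u * S then 1 else if a1 + a2 > u * S then 2 else if a1 + a2 + a3 > u * S then 3 else 4)" for u
    unfolding kappa_eq Let_def S a1_def a2_def a3_def a4_def ..
  have e1: "(c > u * S) = (u < c / S)" for c u using S(2) by (simp add: field_simps)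
  have le1: "(a1 + a2 + a3) / S \<le> 1" "a1 / S \<le> 1" using S nn by (auto simp: field_simps)
  have le2: "a1 / S \<le> (a1 + a2) / S" using S nn by (auto simp: divide_right_mono)
  have "u \<in> {0..<1} \<and> kappa g x u \<in> {1,3} \<longleftrightarrow> u \<in> {0..<a1 / S} \<union> {(a1 + a2) / S ..< (a1 + a2 + a3) / S}" for u
  proof -
    have d1: "0 \<le> a1 / S" "0 \<le> (a1 + a2) / S" using S nn by auto
    show ?thesis
    proof (cases "u < a1 / S")
      case True
      then show ?thesis using d1 le1 by (auto simp: k e1)
    next
      case False
      then have "\<not> u < a1 / S" .
      then show ?thesis using d1 le1 le2 by (auto simp: k e1)
    qed
  qed
  then show ?thesis
    unfolding a1_def[symmetric] a2_def[symmetric] a3_def[symmetric] S_def[symmetric]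
    by blast
qed

lemma meas_up: "measure M0 {u \<in> {0..<1}. kappa g x u \<in> {1,3}} = up g x"
proof -
  define a1 where "a1 = alpha g 1 x"
  define a2 where "a2 = alpha g 2 x"
  define a3 where "a3 = alpha g 3 x"
  define S where "S = mu g x"
  have S: "S = a1 + a2 + a3 + alpha g 4 x" "S > 0" unfolding S_def a1_def a2_def a3_def using mu_alpha mu_pos by auto
  have nn: "a1 \<ge> 0" "a2 \<ge> 0" "a3 \<ge> 0" "alpha g 4 x \<ge> 0" unfolding a1_def a2_def a3_def using alpha_nonneg by auto
  have le1: "(a1 + a2 + a3) / S \<le> 1" "a1 / S \<le> 1" "0 \<le> a1 / S" using S nn by (auto simp: field_simps)
  have le2: "a1 / S \<le> (a1 + a2) / S" "(a1 + a2) / S \<le> (a1 + a2 + a3) / S" using S nn by (auto simp: divide_right_mono)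
  have "measure M0 ({0..<a1 / S} \<union> {(a1 + a2) / S ..< (a1 + a2 + a3) / S})
      = measure lborel ({0..<a1 / S} \<union> {(a1 + a2) / S ..< (a1 + a2 + a3) / S})"
    using le1 le2 by (intro measure_M0) auto
  also have "\<dots> = measure lborel {0..<a1 / S} + measure lborel {(a1 + a2) / S ..< (a1 + a2 + a3) / S}"
    using le1 le2 by (intro measure_Union) (auto simp: emeasure_lborel_Ico)
  also have "\<dots> = (a1 + a3) / S" using le1 le2 S(2) by (simp add: field_simps)
  finally show ?thesis unfolding up_set up_alpha a1_def a2_def a3_def S_def .
qed

end

context schl begin

primrec w :: "nat \<Rightarrow> real" where
  "w 0 = 1"
| "w (Suc n) = w n * up g n / dn g (Suc n)"

lemma w_pos: "w n > 0"
  by (induction n) (auto intro!: divide_pos_pos mult_pos_pos up_pos dn_pos)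

lemma w_bal: "w n * up g n = w (Suc n) * dn g (Suc n)"
  using dn_pos[of "Suc n"] by simp

lemma up_small: "real n \<ge> 2 + (3 * g 1 + 3 * g 3) / g 4 \<Longrightarrow> up g n \<le> 1/4"
proof -
  assume n: "real n \<ge> 2 + (3 * g 1 + 3 * g 3) / g 4"
  define x where "x = real n"
  have "(3 * g 1 + 3 * g 3) / g 4 \<ge> 0" using g1 g3 g4 by (intro divide_nonneg_pos) auto
  then have x3: "x \<ge> 2" using n unfolding x_def by linarith
  have "(x - 2) * g 4 \<ge> 3 * g 1 + 3 * g 3" using n g4 unfolding x_def[symmetric]
    by (simp add: field_simps)
  have "1 * 1 \<le> x * (x - 1)" using x3 by (intro mult_mono) auto
  then have xx: "x * (x - 1) \<ge> 1" by simp
  have "3 * g 1 * 1 \<le> 3 * g 1 * (x * (x - 1))" using xx g1 by (intro mult_left_mono) auto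
  moreover have "(3 * g 1 + 3 * g 3) * (x * (x - 1)) = 3 * g 1 * (x * (x - 1)) + 3 * g 3 * (x * (x - 1))"
    by (simp add: distrib_right)
  ultimately have "3 * g 1 + 3 * g 3 * (x * (x - 1)) \<le> (3 * g 1 + 3 * g 3) * (x * (x - 1))"
    by linarith
  also have "\<dots> \<le> (x - 2) * g 4 * (x * (x - 1))"
    using \<open>(x - 2) * g 4 \<ge> _\<close> xx by (intro mult_right_mono) auto
  finally have *: "3 * g 1 + 3 * g 3 * (x * (x - 1)) \<le> g 4 * x * (x - 1) * (x - 2)"
    by (simp add: algebra_simps)
  have "4 * (g 1 + g 3 * x * (x - 1)) \<le> mu g n"
  proof -
    have "0 \<le> g 2 * x" using g2 x3 by simp
    then show ?thesis unfolding mu_def x_def[symmetric] using * by (simp add: algebra_simps)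
  qed
  then show ?thesis unfolding up_def x_def[symmetric] using mu_pos[of n]
    by (simp add: field_simps)
qed

lemma w_summable: "summable w"
proof -
  obtain N :: nat where N: "real N \<ge> 2 + (3 * g 1 + 3 * g 3) / g 4" using real_arch_simple by blast
  show ?thesis
  proof (rule summable_ratio_test[where c = "1/2" and N = N])
    fix n assume "n \<ge> N"
    then have "real n \<ge> 2 + (3 * g 1 + 3 * g 3) / g 4" "real (Suc n) \<ge> 2 + (3 * g 1 + 3 * g 3) / g 4"
      using N by auto
    then have u: "up g n \<le> 1/4" "up g (Suc n) \<le> 1/4" using up_small by auto
    have d: "dn g (Suc n) \<ge> 3/4" using u(2) up_dn[of "Suc n"] by simp
    have "w (Suc n) = w n * (up g n / dn g (Suc n))" by simp
    also have "\<dots> \<le> w n * (1/2)"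
      using u d w_pos[of n] up_nonneg[of n] by (intro mult_left_mono) (auto simp: field_simps)
    finally show "norm (w (Suc n)) \<le> 1/2 * norm (w n)"
      using w_pos[of n] w_pos[of "Suc n"] by simp
  qed simp
qed

definition Z :: real where "Z = suminf w"

lemma Z_pos: "Z > 0"
  unfolding Z_def using w_summable w_pos by (rule suminf_pos)

definition pi :: "nat \<Rightarrow> real" where "pi x = w x / Z"

lemma pi_pos: "pi x > 0" unfolding pi_def using w_pos Z_pos by simp

lemma pi_bal: "pi n * up g n = pi (Suc n) * dn g (Suc n)"
  unfolding pi_def using w_bal[of n] dn_pos[of "Suc n"] Z_pos by (simp add: field_simps)

lemma stat_sum_gen:
  fixes v :: "nat \<Rightarrow> real"
  shows "(\<Sum>x. v x * trans_P g x y) = (case y of 0 \<Rightarrow> v 1 * dn g 1 | Suc m \<Rightarrow> v m * up g m + v (Suc (Suc m)) * dn g (Suc (Suc m)))"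
proof (cases y)
  case 0
  have "(\<Sum>x. v x * trans_P g x y) = (\<Sum>x\<in>{1}. v x * trans_P g x y)"
    by (rule suminf_finite) (auto simp: \<open>y = 0\<close> trans_P_def)
  then show ?thesis using \<open>y = 0\<close> trans_P_dn[of g 0] by simp
next
  case (Suc m)
  have "(\<Sum>x. v x * trans_P g x y) = (\<Sum>x\<in>{m, Suc (Suc m)}. v x * trans_P g x y)"
    by (rule suminf_finite) (auto simp: \<open>y = Suc m\<close> trans_P_def)
  then show ?thesis using \<open>y = Suc m\<close> trans_P_dn[of g "Suc m"] trans_P_up[of g m] by simp
qed

lemma pi_stationary: "(\<Sum>x. pi x * trans_P g x y) = pi y"
proof (cases y)
  case 0
  then show ?thesis unfolding stat_sum_gen using pi_bal[of 0] up0 by simp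
next
  case (Suc m)
  have "pi m * up g m + pi (Suc (Suc m)) * dn g (Suc (Suc m)) = pi (Suc m) * (up g (Suc m) + dn g (Suc m))"
    using pi_bal[of m] pi_bal[of "Suc m"] by (simp add: algebra_simps)
  then show ?thesis unfolding stat_sum_gen using Suc up_dn[of "Suc m"] by simp
qed

lemma pi_summable: "summable pi"
  unfolding pi_def using w_summable by (simp add: summable_divide)

lemma pi_sum: "(\<Sum>x. pi x) = 1"
  unfolding pi_def using w_summable Z_pos by (simp add: suminf_divide Z_def)

definition pip :: "nat pmf" where "pip = embed_pmf pi"

lemma pmf_pip: "pmf pip x = pi x"
proof -
  have nn: "\<And>x. 0 \<le> pi x" using pi_pos less_imp_le by blast
  have "(\<integral>\<^sup>+ x. ennreal (pi x) \<partial>count_space UNIV) = (\<Sum>x. ennreal (pi x))"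
    by (rule nn_integral_count_space_nat)
  also have "\<dots> = ennreal (\<Sum>x. pi x)" using nn pi_summable by (rule suminf_ennreal2)
  finally have "(\<integral>\<^sup>+ x. ennreal (pi x) \<partial>count_space UNIV) = 1" using pi_sum by simp
  then show ?thesis unfolding pip_def using nn by (subst pmf_embed_pmf) auto
qed

lemma pmf_sum1: "(\<Sum>x. pmf p x) = (1::real)" "summable (pmf p)"
proof -
  have "(\<integral>\<^sup>+ x. 1 \<partial>measure_pmf p) = 1"
    by (simp add: measure_pmf.emeasure_space_1)
  then have "(\<integral>\<^sup>+ x. ennreal (pmf p x) \<partial>count_space UNIV) = 1"
    using nn_integral_measure_pmf[of p "\<lambda>_. 1"] by simp
  then have e: "(\<Sum>x. ennreal (pmf p x)) = 1" by (simp add: nn_integral_count_space_nat)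
  then show s: "summable (pmf p)" by (intro summable_suminf_not_top) auto
  have "ennreal (\<Sum>x. pmf p x) = 1" using e suminf_ennreal2[of "pmf p", OF pmf_nonneg s] by simp
  then show "(\<Sum>x. pmf p x) = (1::real)" by (simp add: ennreal_eq_1)
qed

lemma stationary_unique:
  assumes "stationary g p"
  shows "pmf p x = pi x"
proof -
  define v where "v x = pmf p x" for x
  have st: "v y = (\<Sum>x. v x * trans_P g x y)" for y using assms unfolding stationary_def v_def by blast
  have bal: "v (Suc n) * dn g (Suc n) = v n * up g n" for n
  proof (induction n)
    case 0
    have "v 0 = v 1 * dn g 1" using st[of 0] unfolding stat_sum_gen by simp
    then show ?case using up0 by simp
  next
    case (Suc n)
    have e: "v (Suc n) = v n * up g n + v (Suc (Suc n)) * dn g (Suc (Suc n))"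
      using st[of "Suc n"] unfolding stat_sum_gen by simp
    have u: "v (Suc n) * up g (Suc n) = v (Suc n) - v (Suc n) * dn g (Suc n)"
      using up_dn[of "Suc n"] by (simp add: algebra_simps flip: distrib_left)
    show ?case using e u Suc.IH by linarith
  qed
  have vw: "v n = v 0 * w n" for n
  proof (induction n)
    case (Suc n)
    then show ?case using bal[of n] dn_pos[of "Suc n"] by (simp add: field_simps)
  qed simp
  have "1 = (\<Sum>n. v n)" using pmf_sum1 unfolding v_def by simp
  also have "\<dots> = (\<Sum>n. v 0 * w n)" by (rule arg_cong[where f=suminf]) (rule ext, rule vw)
  also have "\<dots> = v 0 * Z" unfolding Z_def using w_summable by (simp add: suminf_mult)
  finally have "v 0 = 1 / Z" using Z_pos by (simp add: field_simps)
  then show ?thesis using vw[of x] unfolding v_def pi_def by (simp only:) simp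
qed

lemma part1: "\<exists>!p :: nat pmf. stationary g p"
proof (rule ex1I[of _ pip])
  show "stationary g pip" unfolding stationary_def pmf_pip using pi_stationary by simp
  fix p assume "stationary g p"
  then show "p = pip" by (intro pmf_eqI) (simp add: stationary_unique pmf_pip)
qed

end

lemma prob_noise: "prob_space noise"
  unfolding noise_M0 by (rule prob_space_PiM) (rule prob_M0)

interpretation NP: product_prob_space "\<lambda>_::int. M0" UNIV
  by (simp add: product_prob_space_def product_prob_space_axioms_def product_sigma_finite_def
      prob_M0 prob_space_imp_sigma_finite)

interpretation N: prob_space noise by (rule prob_noise)

lemma space_noise: "space noise = {q. \<forall>i. q i \<in> {0..1}}"
  by (auto simp: noise_M0 space_PiM space_M0 PiE_def extensional_def)

lemma restrict_UNIV': "restrict f UNIV = f" by (rule ext) simp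

definition ishift :: "(int \<Rightarrow> real) \<Rightarrow> (int \<Rightarrow> real)" where
  "ishift q = (\<lambda>n. q (n - 1))"

lemma shift_meas[measurable]: "shift \<in> noise \<rightarrow>\<^sub>M noise"
  unfolding noise_M0 shift_def
  by (rule measurable_PiM_single') (auto simp: space_PiM)

lemma ishift_meas[measurable]: "ishift \<in> noise \<rightarrow>\<^sub>M noise"
  unfolding noise_M0 ishift_def
  by (rule measurable_PiM_single') (auto simp: space_PiM)

lemma shift_distr: "distr noise noise shift = noise"
proof -
  have "distr (PiM UNIV (\<lambda>_. M0)) (PiM UNIV (\<lambda>i. (\<lambda>_::int. M0) ((\<lambda>n. n + 1) i))) (\<lambda>\<omega>. \<lambda>n\<in>UNIV. \<omega> ((\<lambda>n::int. n + 1) n))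
     = PiM UNIV (\<lambda>i. (\<lambda>_::int. M0) ((\<lambda>n. n + 1) i))"
    by (rule distr_PiM_reindex) (auto simp: prob_M0 inj_on_def)
  then show ?thesis unfolding noise_M0 shift_def restrict_UNIV' by simp
qed

lemma ishift_distr: "distr noise noise ishift = noise"
proof -
  have "distr (PiM UNIV (\<lambda>_. M0)) (PiM UNIV (\<lambda>i. (\<lambda>_::int. M0) ((\<lambda>n. n - 1) i))) (\<lambda>\<omega>. \<lambda>n\<in>UNIV. \<omega> ((\<lambda>n::int. n - 1) n))
     = PiM UNIV (\<lambda>i. (\<lambda>_::int. M0) ((\<lambda>n. n - 1) i))"
    by (rule distr_PiM_reindex) (auto simp: prob_M0 inj_on_def)
  then show ?thesis unfolding noise_M0 ishift_def restrict_UNIV' by simp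
qed

lemma funpow_meas: "f \<in> M \<rightarrow>\<^sub>M M \<Longrightarrow> (f ^^ n) \<in> M \<rightarrow>\<^sub>M M"
  by (induction n) auto

lemma funpow_distr:
  assumes "f \<in> M \<rightarrow>\<^sub>M M" "distr M M f = M"
  shows "distr M M (f ^^ n) = M"
proof (induction n)
  case 0 then show ?case by (simp add: id_def)
next
  case (Suc n)
  have "distr M M (f ^^ Suc n) = distr (distr M M (f ^^ n)) M f"
    using assms(1) funpow_meas[OF assms(1), of n] by (subst distr_distr) (auto simp: comp_def)
  also have "\<dots> = M" using Suc assms(2) by simp
  finally show ?case .
qed

lemma shiftn_meas[measurable]: "(shift ^^ n) \<in> noise \<rightarrow>\<^sub>M noise"
  by (rule funpow_meas) (rule shift_meas)
lemma ishiftn_meas[measurable]: "(ishift ^^ n) \<in> noise \<rightarrow>\<^sub>M noise"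
  by (rule funpow_meas) (rule ishift_meas)

lemma measure_shiftn: "S \<in> sets noise \<Longrightarrow> measure noise ((shift ^^ n) -` S \<inter> space noise) = measure noise S"
  using measure_distr[OF shiftn_meas[of n], of S] funpow_distr[OF shift_meas shift_distr, of n] by simp
lemma measure_ishiftn: "S \<in> sets noise \<Longrightarrow> measure noise ((ishift ^^ n) -` S \<inter> space noise) = measure noise S"
  using measure_distr[OF ishiftn_meas[of n], of S] funpow_distr[OF ishift_meas ishift_distr, of n] by simp

lemma shiftn_apply: "(shift ^^ n) q = (\<lambda>i. q (i + int n))"
  by (induction n arbitrary: q) (auto simp: shift_def algebra_simps)
lemma ishiftn_apply: "(ishift ^^ n) q = (\<lambda>i. q (i - int n))"
  by (induction n arbitrary: q) (auto simp: ishift_def algebra_simps)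
lemma shift_ishift: "(shift ^^ n) ((ishift ^^ n) q) = q"
  by (simp add: shiftn_apply ishiftn_apply)

lemma shiftn_space: "q \<in> space noise \<Longrightarrow> (shift ^^ n) q \<in> space noise"
  by (simp add: space_noise shiftn_apply)
lemma ishiftn_space: "q \<in> space noise \<Longrightarrow> (ishift ^^ n) q \<in> space noise"
  by (simp add: space_noise ishiftn_apply)

definition ext0 :: "int set \<Rightarrow> (int \<Rightarrow> real) \<Rightarrow> (int \<Rightarrow> real)" where
  "ext0 A r = (\<lambda>i. if i \<in> A then r i else 0)"

lemma ext0_meas: "ext0 A \<in> PiM A (\<lambda>_. M0) \<rightarrow>\<^sub>M noise"
  unfolding noise_M0 ext0_def
proof (rule measurable_PiM_single')
  fix i :: int
  show "(\<lambda>r. if i \<in> A then r i else 0) \<in> PiM A (\<lambda>_. M0) \<rightarrow>\<^sub>M M0"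
    by (cases "i \<in> A") (auto simp: space_M0)
qed (auto simp: space_PiM space_M0 PiE_iff)

definition dep :: "int set \<Rightarrow> (int \<Rightarrow> real) set \<Rightarrow> bool" where
  "dep A E \<longleftrightarrow> E \<subseteq> space noise \<and> (\<forall>q\<in>space noise. \<forall>q'\<in>space noise. (\<forall>i\<in>A. q i = q' i) \<longrightarrow> (q \<in> E \<longleftrightarrow> q' \<in> E))"

lemma indep_coords: "prob_space.indep_vars noise (\<lambda>_. M0) (\<lambda>i q. q i) UNIV"
proof -
  have "distr noise (PiM UNIV (\<lambda>_. M0)) (\<lambda>x. \<lambda>i\<in>UNIV. x i) = noise"
    unfolding restrict_UNIV' noise_M0[symmetric] by simp
  also have "\<dots> = PiM UNIV (\<lambda>i. distr noise M0 (\<lambda>q. q i))"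
    unfolding noise_M0 using NP.PiM_component by simp
  finally show ?thesis
    by (subst N.indep_vars_iff_distr_eq_PiM) (auto simp: noise_M0)
qed

lemma dep_preimage:
  assumes "dep A E" "E \<in> sets noise"
  shows "E = (\<lambda>q. restrict q A) -` {r \<in> space (PiM A (\<lambda>_. M0)). ext0 A r \<in> E} \<inter> space noise"
    and "{r \<in> space (PiM A (\<lambda>_. M0)). ext0 A r \<in> E} \<in> sets (PiM A (\<lambda>_. M0))"
proof -
  have sp: "ext0 A (restrict q A) \<in> space noise" if "q \<in> space noise" for q
    using that by (auto simp: space_noise ext0_def)
  have iff: "q \<in> E \<longleftrightarrow> ext0 A (restrict q A) \<in> E" if qs: "q \<in> space noise" for q
  proof -
    have agree: "\<forall>i\<in>A. q i = ext0 A (restrict q A) i" by (simp add: ext0_def)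
    show ?thesis using assms(1) qs sp[OF qs] agree unfolding dep_def by blast
  qed
  have rs: "restrict q A \<in> space (PiM A (\<lambda>_. M0))" if qs: "q \<in> space noise" for q
    using qs by (simp add: space_PiM space_noise space_M0)
  show "E = (\<lambda>q. restrict q A) -` {r \<in> space (PiM A (\<lambda>_. M0)). ext0 A r \<in> E} \<inter> space noise"
  proof (intro set_eqI iffI)
    fix q assume q: "q \<in> E"
    then have qs: "q \<in> space noise" using assms(1) unfolding dep_def by blast
    show "q \<in> (\<lambda>q. restrict q A) -` {r \<in> space (PiM A (\<lambda>_. M0)). ext0 A r \<in> E} \<inter> space noise"
      using iff[OF qs] q qs rs[OF qs] by blast
  next
    fix q assume "q \<in> (\<lambda>q. restrict q A) -` {r \<in> space (PiM A (\<lambda>_. M0)). ext0 A r \<in> E} \<inter> space noise"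
    then have qs: "q \<in> space noise" and e: "ext0 A (restrict q A) \<in> E" by auto
    then show "q \<in> E" using iff[OF qs] by blast
  qed
  show "{r \<in> space (PiM A (\<lambda>_. M0)). ext0 A r \<in> E} \<in> sets (PiM A (\<lambda>_. M0))"
    using measurable_sets[OF ext0_meas assms(2)] by (simp add: vimage_def Int_def conj_commute)
qed

lemma indep_events:
  assumes "dep A E" "dep B F" "E \<in> sets noise" "F \<in> sets noise" "A \<inter> B = {}"
  shows "measure noise (E \<inter> F) = measure noise E * measure noise F"
proof -
  let ?E' = "{r \<in> space (PiM A (\<lambda>_. M0)). ext0 A r \<in> E}"
  let ?F' = "{r \<in> space (PiM B (\<lambda>_. M0)). ext0 B r \<in> F}"
  have iv: "prob_space.indep_var noise (PiM A (\<lambda>_. M0)) (\<lambda>q. restrict (\<lambda>i. q i) A) (PiM B (\<lambda>_. M0)) (\<lambda>q. restrict (\<lambda>i. q i) B)"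
    by (rule N.indep_var_restrict[OF indep_coords]) (use assms(5) in auto)
  have "measure noise ((\<lambda>x. (restrict x A, restrict x B)) -` (?E' \<times> ?F') \<inter> space noise)
     = measure noise ((\<lambda>q. restrict q A) -` ?E' \<inter> space noise) * measure noise ((\<lambda>q. restrict q B) -` ?F' \<inter> space noise)"
    using N.indep_varD[OF iv dep_preimage(2)[OF assms(1,3)] dep_preimage(2)[OF assms(2,4)]] by simp
  moreover have "(\<lambda>x. (restrict x A, restrict x B)) -` (?E' \<times> ?F') \<inter> space noise = E \<inter> F"
    using dep_preimage(1)[OF assms(1,3)] dep_preimage(1)[OF assms(2,4)] by blast
  ultimately show ?thesis
    using dep_preimage(1)[OF assms(1,3), symmetric] dep_preimage(1)[OF assms(2,4), symmetric] by simp
qed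


lemma comp_meas[measurable]: "(\<lambda>q. q i) \<in> borel_measurable noise"
proof -
  have "(\<lambda>q. q i) \<in> noise \<rightarrow>\<^sub>M M0" unfolding noise_M0 by simp
  moreover have "(\<lambda>u. u) \<in> M0 \<rightarrow>\<^sub>M borel" unfolding M0_def
    by (rule measurable_restrict_space1) simp
  ultimately show ?thesis by (rule measurable_compose)
qed

lemma M0fin: "finite_measure M0" using prob_M0 unfolding prob_space_def by simp

lemma coord_M0[measurable]: "(\<lambda>q. q i) \<in> noise \<rightarrow>\<^sub>M M0"
  unfolding noise_M0 by simp

lemma coord_sets: "S \<in> sets M0 \<Longrightarrow> {q \<in> space noise. q i \<in> S} \<in> sets noise"
  using measurable_sets[OF coord_M0[of i], of S] by (simp add: vimage_def Int_def conj_commute)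

lemma kappa_meas[measurable]: "(\<lambda>u. kappa g x u) \<in> borel \<rightarrow>\<^sub>M count_space UNIV"
proof -
  have "(\<lambda>u. kappa g x u) = (\<lambda>u. let a1 = alpha g 1 x; a2 = alpha g 2 x; a3 = alpha g 3 x; a4 = alpha g 4 x;
      S = a1 + a2 + a3 + a4 in
     if a1 > u * S then 1 else if a1 + a2 > u * S then 2 else if a1 + a2 + a3 > u * S then 3 else 4)"
    by (rule ext) (rule kappa_eq)
  also have "\<dots> \<in> borel \<rightarrow>\<^sub>M count_space UNIV" unfolding Let_def by measurable
  finally show ?thesis .
qed

lemma stp_meas[measurable]: "(\<lambda>u. stp g x u) \<in> borel \<rightarrow>\<^sub>M count_space UNIV"
proof -
  have "(\<lambda>u. stp g x u) = (\<lambda>u. if kappa g x u \<in> {1,3} then Suc x else x - 1)"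
    by (rule ext) (rule stp_eq)
  also have "\<dots> = (\<lambda>k. if k \<in> {1,3} then Suc x else x - 1) \<circ> (\<lambda>u. kappa g x u)" by (simp add: comp_def)
  also have "\<dots> \<in> borel \<rightarrow>\<^sub>M count_space UNIV"
    by (rule measurable_comp[OF kappa_meas]) simp
  finally show ?thesis .
qed

lemma phi_Suc': "phi g (Suc n) q x = stp g (phi g n q x) (q (int n))"
  by (simp add: fstep_stp shiftn_apply)

declare phi.simps(2)[simp del]
declare phi_Suc'[simp]

lemma phi_add: "phi g (m + n) q x = phi g n ((shift ^^ m) q) (phi g m q x)"
  by (induction n) (auto simp: shiftn_apply ac_simps)

lemma phi_dep: "(\<And>i. 0 \<le> i \<Longrightarrow> i < int n \<Longrightarrow> q i = q' i) \<Longrightarrow> phi g n q x = phi g n q' x"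
  by (induction n) auto

lemma phi_meas[measurable]: "(\<lambda>q. phi g n q x) \<in> noise \<rightarrow>\<^sub>M count_space UNIV"
proof (induction n)
  case 0
  then show ?case by simp
next
  case (Suc n)
  have *: "(\<lambda>q. stp g y (q (int n))) \<in> noise \<rightarrow>\<^sub>M count_space UNIV" for y
    by measurable
  show ?case unfolding phi_Suc'
    by (rule measurable_compose_countable[where f = "\<lambda>y q. stp g y (q (int n))", OF * Suc])
qed

lemma stp_le: "stp g x u \<le> Suc x" unfolding stp_eq by auto

lemma phi_le: "phi g n q y \<le> y + n"
  by (induction n) (auto intro: order.trans[OF stp_le])

lemma sets_phi_eq[measurable]: "{q \<in> space noise. phi g n q y = x} \<in> sets noise"
  by measurable

lemma dep_phi_eq: "dep {i. 0 \<le> i \<and> i < int n} {q \<in> space noise. P (phi g n q y)}"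
  unfolding dep_def
proof (intro conjI ballI impI)
  fix q q' assume q: "q \<in> space noise" "q' \<in> space noise" and a: "\<forall>i\<in>{i. 0 \<le> i \<and> i < int n}. q i = q' i"
  have "phi g n q y = phi g n q' y" by (rule phi_dep) (use a in auto)
  then show "q \<in> {q \<in> space noise. P (phi g n q y)} \<longleftrightarrow> q' \<in> {q \<in> space noise. P (phi g n q y)}"
    using q by simp
qed auto

lemma dep_coord: "dep {i} {q \<in> space noise. q i \<in> S}"
  unfolding dep_def by auto

lemma measure_coord: "S \<in> sets M0 \<Longrightarrow> measure noise {q \<in> space noise. q i \<in> S} = measure M0 S"
  using NP.emeasure_PiM_Collect_single[of i S] unfolding noise_M0[symmetric]
  by (simp add: measure_def)

lemma measure_coord1: "measure noise {q \<in> space noise. q i = 1} = 0"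
proof -
  have "measure noise {q \<in> space noise. q i \<in> {1}} = measure M0 {1}"
    by (rule measure_coord) (auto intro: M0_sets)
  also have "\<dots> = 0" by (subst measure_M0) auto
  finally show ?thesis by simp
qed

definition preds :: "nat \<Rightarrow> nat set" where "preds z = {x. Suc x = z \<or> x = Suc z}"

lemma finite_preds: "finite (preds z)"
  by (rule finite_subset[of _ "{..Suc z}"]) (auto simp: preds_def)

context schl begin

lemma upset_sets: "{u \<in> {0..<1}. kappa g x u \<in> {1,3}} \<in> sets M0"
proof (rule M0_sets)
  show "{u \<in> {0..<1}. kappa g x u \<in> {1,3}} \<in> sets borel" unfolding up_set by auto
qed auto

lemma trans_P_nonneg: "trans_P g x y \<ge> 0"
  unfolding trans_P_def using up_nonneg[of x] dn_nonneg[of x] unfolding up_def dn_def by auto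

lemma meas_S:
  assumes "x \<in> preds z"
  shows "measure M0 {u \<in> {0..<1}. stp g x u = z} = trans_P g x z"
    and "{u \<in> {0..<1}. stp g x u = z} \<in> sets M0"
proof -
  have one: "measure M0 {0..<1} = 1" by (subst measure_M0) auto
  have s01: "{0..<1::real} \<in> sets M0" by (rule M0_sets) auto
  have "(measure M0 {u \<in> {0..<1}. stp g x u = z} = trans_P g x z) \<and> {u \<in> {0..<1}. stp g x u = z} \<in> sets M0"
  proof (cases "z = Suc x")
    case True
    have "{u \<in> {0..<1}. stp g x u = z} = {u \<in> {0..<1}. kappa g x u \<in> {1,3}}"
      using True by (auto simp: stp_eq)
    then show ?thesis using True meas_up upset_sets trans_P_up by simp
  next
    case False
    then have x: "x = Suc z" using assms by (auto simp: preds_def)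
    have e: "{u \<in> {0..<1}. stp g x u = z} = {0..<1} - {u \<in> {0..<1}. kappa g x u \<in> {1,3}}"
      using x by (auto simp: stp_eq)
    have "measure M0 ({0..<1} - {u \<in> {0..<1}. kappa g x u \<in> {1,3}}) = measure M0 {0..<1} - measure M0 {u \<in> {0..<1}. kappa g x u \<in> {1,3}}"
      by (rule finite_measure.finite_measure_Diff[OF M0fin s01 upset_sets]) auto
    then have "measure M0 ({0..<1} - {u \<in> {0..<1}. kappa g x u \<in> {1,3}}) = 1 - up g x"
      using one meas_up by simp
    also have "\<dots> = dn g x" using up_dn[of x] by simp
    finally show ?thesis unfolding e using x trans_P_dn s01 upset_sets by auto
  qed
  then show "measure M0 {u \<in> {0..<1}. stp g x u = z} = trans_P g x z"
    and "{u \<in> {0..<1}. stp g x u = z} \<in> sets M0" by auto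
qed

lemma markov_step:
  "measure noise {q \<in> space noise. phi g (Suc n) q y = z}
     \<le> (\<Sum>x\<in>preds z. measure noise {q \<in> space noise. phi g n q y = x} * trans_P g x z)"
proof -
  define E where "E x = {q \<in> space noise. phi g n q y = x}" for x
  define S where "S x = {u \<in> {0..<1}. stp g x u = z}" for x
  define F where "F x = {q \<in> space noise. q (int n) \<in> S x}" for x
  define B where "B = {q \<in> space noise. q (int n) = 1}"
  have EF: "E x \<in> sets noise" "F x \<in> sets noise" if "x \<in> preds z" for x
    unfolding E_def F_def using coord_sets[OF meas_S(2)[OF that, folded S_def]] by auto
  have sub: "{q \<in> space noise. phi g (Suc n) q y = z} \<subseteq> (\<Union>x\<in>preds z. E x \<inter> F x) \<union> B"
  proof
    fix q assume q: "q \<in> {q \<in> space noise. phi g (Suc n) q y = z}"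
    then have qs: "q \<in> space noise" and eq: "stp g (phi g n q y) (q (int n)) = z"
      by (auto simp: phi_Suc')
    show "q \<in> (\<Union>x\<in>preds z. E x \<inter> F x) \<union> B"
    proof (cases "q (int n) = 1")
      case True then show ?thesis using qs by (auto simp: B_def)
    next
      case False
      then have lt: "q (int n) < 1" "q (int n) \<ge> 0" using qs by (auto simp: space_noise less_le)
      have "phi g n q y \<in> preds z" using stp_lt1[OF lt(1), of "phi g n q y"] eq by (auto simp: preds_def)
      then show ?thesis using qs eq lt by (auto simp: E_def F_def S_def)
    qed
  qed
  have "measure noise {q \<in> space noise. phi g (Suc n) q y = z} \<le> measure noise ((\<Union>x\<in>preds z. E x \<inter> F x) \<union> B)"
    using sub EF by (intro N.finite_measure_mono) (auto simp: B_def intro!: sets.finite_UN finite_preds)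
  also have "\<dots> \<le> measure noise (\<Union>x\<in>preds z. E x \<inter> F x) + measure noise B"
    using EF by (intro measure_Un_le) (auto simp: B_def intro!: sets.finite_UN finite_preds)
  also have "measure noise B = 0" unfolding B_def by (rule measure_coord1)
  also have "measure noise (\<Union>x\<in>preds z. E x \<inter> F x) \<le> (\<Sum>x\<in>preds z. measure noise (E x \<inter> F x))"
    using EF by (intro measure_UNION_le finite_preds) auto
  also have "\<dots> = (\<Sum>x\<in>preds z. measure noise (E x) * trans_P g x z)"
  proof (rule sum.cong)
    fix x assume x: "x \<in> preds z"
    have "measure noise (E x \<inter> F x) = measure noise (E x) * measure noise (F x)"
      by (rule indep_events[where A = "{i. 0 \<le> i \<and> i < int n}" and B = "{int n}"])
         (use EF[OF x] in \<open>auto simp only: E_def F_def intro: dep_phi_eq dep_coord\<close>)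
    also have "measure noise (F x) = trans_P g x z"
      unfolding F_def using measure_coord[OF meas_S(2)[OF x, folded S_def]] meas_S(1)[OF x, folded S_def] by simp
    finally show "measure noise (E x \<inter> F x) = measure noise (E x) * trans_P g x z" .
  qed simp
  finally show ?thesis unfolding E_def by simp
qed

lemma preds_stationary: "(\<Sum>x\<in>preds z. pi x * trans_P g x z) = pi z"
proof -
  have "(\<Sum>x. pi x * trans_P g x z) = (\<Sum>x\<in>preds z. pi x * trans_P g x z)"
    by (rule suminf_finite[OF finite_preds]) (auto simp: preds_def trans_P_def)
  then show ?thesis using pi_stationary by simp
qed

lemma tight: "measure noise {q \<in> space noise. phi g n q y = z} \<le> pi z / pi y"
proof (induction n arbitrary: z)
  case 0
  show ?case
  proof (cases "y = z")
    case True then show ?thesis using pi_pos[of y] by simp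
  next
    case False then show ?thesis using pi_pos[of y] pi_pos[of z] by simp
  qed
next
  case (Suc n)
  have "measure noise {q \<in> space noise. phi g (Suc n) q y = z}
     \<le> (\<Sum>x\<in>preds z. measure noise {q \<in> space noise. phi g n q y = x} * trans_P g x z)"
    by (rule markov_step)
  also have "\<dots> \<le> (\<Sum>x\<in>preds z. pi x / pi y * trans_P g x z)"
    using Suc by (intro sum_mono mult_right_mono) (auto simp: trans_P_nonneg)
  also have "\<dots> = (\<Sum>x\<in>preds z. pi x * trans_P g x z) / pi y"
    by (simp add: sum_divide_distrib)
  also have "\<dots> = pi z / pi y" using preds_stationary by simp
  finally show ?case .
qed

definition tl :: "nat \<Rightarrow> real" where "tl K = (\<Sum>i. pi (i + Suc K))"

lemma tl_tendsto: "tl \<longlonglongrightarrow> 0"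
proof -
  have "\<exists>N. \<forall>n\<ge>N. norm (\<Sum>i. pi (i + n)) < r" if "r > 0" for r
    using suminf_exist_split[OF that pi_summable] by blast
  then have "(\<lambda>n. \<Sum>i. pi (i + n)) \<longlonglongrightarrow> 0"
    by (auto simp: lim_sequentially dist_real_def)
  then have "(\<lambda>K. \<Sum>i. pi (i + Suc K)) \<longlonglongrightarrow> 0" by (rule LIMSEQ_Suc)
  then show ?thesis unfolding tl_def .
qed

lemma tail_bound: "measure noise {q \<in> space noise. phi g n q y > K} \<le> tl K / pi y"
proof -
  have sub: "{q \<in> space noise. phi g n q y > K} \<subseteq> (\<Union>z\<in>{K<..y+n}. {q \<in> space noise. phi g n q y = z})"
    using phi_le[of g n _ y] by auto
  have "measure noise {q \<in> space noise. phi g n q y > K} \<le> measure noise (\<Union>z\<in>{K<..y+n}. {q \<in> space noise. phi g n q y = z})"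
    using sub by (intro N.finite_measure_mono) auto
  also have "\<dots> \<le> (\<Sum>z\<in>{K<..y+n}. measure noise {q \<in> space noise. phi g n q y = z})"
    by (intro measure_UNION_le) auto
  also have "\<dots> \<le> (\<Sum>z\<in>{K<..y+n}. pi z / pi y)" by (intro sum_mono tight)
  also have "\<dots> = (\<Sum>z\<in>{K<..y+n}. pi z) / pi y" by (simp add: sum_divide_distrib)
  also have "(\<Sum>z\<in>{K<..y+n}. pi z) = (\<Sum>i\<in>{..<y+n-K}. pi (i + Suc K))"
  proof -
    show ?thesis
      by (rule sum.reindex_bij_witness[of _ "\<lambda>i. i + Suc K" "\<lambda>z. z - Suc K"]) auto
  qed
  also have "\<dots> \<le> tl K"
  proof -
    have "summable (\<lambda>i. pi (i + Suc K))" using summable_iff_shift[of pi "Suc K"] pi_summable by blast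
    then show ?thesis unfolding tl_def
      using pi_pos by (intro sum_le_suminf) (auto simp: less_imp_le)
  qed
  finally show ?thesis using pi_pos[of y] by (simp add: divide_right_mono)
qed

end

definition good :: "(int \<Rightarrow> real) \<Rightarrow> bool" where "good q \<longleftrightarrow> (\<forall>i. q i < 1)"

lemma good_shiftn: "good q \<Longrightarrow> good ((shift ^^ n) q)"
  by (simp add: good_def shiftn_apply)
lemma good_ishiftn: "good q \<Longrightarrow> good ((ishift ^^ n) q)"
  by (simp add: good_def ishiftn_apply)

lemma bad_null: "{q \<in> space noise. \<not> good q} \<in> null_sets noise"
proof -
  have "{q \<in> space noise. \<not> good q} = (\<Union>i. {q \<in> space noise. q i = 1})"
  proof (intro set_eqI iffI)
    fix q assume q: "q \<in> {q \<in> space noise. \<not> good q}"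
    then obtain i where "\<not> q i < 1" unfolding good_def by auto
    moreover have "q i \<le> 1" using q by (auto simp: space_noise)
    ultimately show "q \<in> (\<Union>i. {q \<in> space noise. q i = 1})" using q by auto
  next
    fix q assume "q \<in> (\<Union>i. {q \<in> space noise. q i = 1})"
    then obtain i where i: "q \<in> space noise" "q i = 1" by auto
    then have "\<not> good q" unfolding good_def by (metis less_irrefl)
    then show "q \<in> {q \<in> space noise. \<not> good q}" using i by auto
  qed
  also have "\<dots> \<in> null_sets noise"
  proof (rule null_sets_UN')
    fix i :: int
    have "{q \<in> space noise. q i = 1} \<in> sets noise" by measurable
    then show "{q \<in> space noise. q i = 1} \<in> null_sets noise"
      using measure_coord1[of i] by (simp add: N.emeasure_eq_measure null_sets_def)
  qed simp
  finally show ?thesis .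
qed

lemma measure_good_le:
  assumes "S \<in> sets noise" "T \<in> sets noise" "\<And>q. q \<in> S \<Longrightarrow> good q \<Longrightarrow> q \<in> T"
  shows "measure noise S \<le> measure noise T"
proof -
  have "S \<subseteq> T \<union> {q \<in> space noise. \<not> good q}"
    using assms(1,3) sets.sets_into_space[OF assms(1)] by blast
  then have "measure noise S \<le> measure noise (T \<union> {q \<in> space noise. \<not> good q})"
    using assms(1,2) bad_null by (intro N.finite_measure_mono) auto
  also have "\<dots> = measure noise T" using assms(2) bad_null by (rule measure_Un_null_set)
  finally show ?thesis .
qed

lemma good_AE: "AE q in noise. good q"
  using bad_null by (rule AE_I') auto

context schl begin

lemma stp_par: "u < 1 \<Longrightarrow> even (stp g x u) = odd x"
  using stp_lt1[of u x] by (cases x) auto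

lemma stp_ge: "u < 1 \<Longrightarrow> stp g x u \<ge> x - 1"
  using stp_lt1[of u x] by auto

lemma par_gap: "x < (y::nat) \<Longrightarrow> even x = even y \<Longrightarrow> Suc x < y"
  by (metis Suc_lessI even_Suc)

lemma stp_mono: "u < 1 \<Longrightarrow> x \<le> y \<Longrightarrow> even x = even y \<Longrightarrow> stp g x u \<le> stp g y u"
proof -
  assume u: "u < 1" and xy: "x \<le> y" "even x = even y"
  show ?thesis
  proof (cases "x = y")
    case False
    then have "Suc x < y" using xy par_gap by auto
    then show ?thesis using stp_le[of g x u] stp_ge[OF u, of y] by linarith
  qed simp
qed

lemma phi_par: "(\<And>j. j < n \<Longrightarrow> q (int j) < 1) \<Longrightarrow> even (phi g n q x) = (even x = even n)"
  by (induction n) (auto simp: stp_par)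

lemma phi_mono: "(\<And>j. j < n \<Longrightarrow> q (int j) < 1) \<Longrightarrow> x \<le> y \<Longrightarrow> even x = even y \<Longrightarrow> phi g n q x \<le> phi g n q y"
proof (induction n)
  case (Suc n)
  have "even (phi g n q x) = even (phi g n q y)" using phi_par[of n q x] phi_par[of n q y] Suc by auto
  then show ?case using Suc by (auto intro!: stp_mono)
qed simp

lemma phi_coal: "phi g n q x = phi g n q y \<Longrightarrow> phi g (n + m) q x = phi g (n + m) q y"
  by (simp add: phi_add)

definition tau :: "nat \<Rightarrow> real" where
  "tau K = Max ((\<lambda>x. (alpha g 1 x + alpha g 2 x + alpha g 3 x) / mu g x) ` {3..K})"

lemma alpha4_pos: "x \<ge> 3 \<Longrightarrow> alpha g 4 x > 0"
proof -
  assume x: "x \<ge> 3"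
  then have "real x * (real x - 1) * (real x - 2) > 0" by (auto intro!: mult_pos_pos)
  then show ?thesis using g4 by (simp add: alpha_def mult.assoc)
qed

lemma tau_lt1: "K \<ge> 3 \<Longrightarrow> tau K < 1"
  unfolding tau_def
proof (subst Max_less_iff)
  assume K: "K \<ge> 3"
  show "\<forall>a\<in>(\<lambda>x. (alpha g 1 x + alpha g 2 x + alpha g 3 x) / mu g x) ` {3..K}. a < 1"
  proof
    fix a assume "a \<in> (\<lambda>x. (alpha g 1 x + alpha g 2 x + alpha g 3 x) / mu g x) ` {3..K}"
    then obtain x where x: "x \<ge> 3" "a = (alpha g 1 x + alpha g 2 x + alpha g 3 x) / mu g x" by auto
    have "alpha g 1 x + alpha g 2 x + alpha g 3 x < mu g x" using alpha4_pos[OF x(1)] by (simp add: mu_alpha)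
    then show "a < 1" using mu_pos[of x] unfolding x(2) by (simp add: divide_less_eq_1_pos)
  qed
qed auto

lemma tau_down: "3 \<le> x \<Longrightarrow> x \<le> K \<Longrightarrow> tau K \<le> u \<Longrightarrow> stp g x u = x - 1"
proof -
  assume x: "3 \<le> x" "x \<le> K" and u: "tau K \<le> u"
  have "(alpha g 1 x + alpha g 2 x + alpha g 3 x) / mu g x \<le> tau K"
    unfolding tau_def using x by (intro Max_ge) auto
  then have "alpha g 1 x + alpha g 2 x + alpha g 3 x \<le> tau K * mu g x"
    using mu_pos[of x] by (simp add: pos_divide_le_eq)
  then have le: "alpha g 1 x + alpha g 2 x + alpha g 3 x \<le> u * mu g x"
    using mult_right_mono[OF u, of "mu g x"] mu_pos[of x] by linarith
  have "kappa g x u = 4"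
    using le alpha_nonneg[of 2 x] alpha_nonneg[of 3 x] unfolding kappa_eq Let_def mu_alpha[symmetric]
    by auto
  then show ?thesis by (simp add: stp_eq)
qed

definition m1 :: real where "m1 = alpha g 1 3 / mu g 3"
definition m2 :: real where "m2 = min (alpha g 1 1 / mu g 1) ((alpha g 1 3 + alpha g 2 3) / mu g 3)"

lemma m12: "0 \<le> m1" "m1 < m2" "m2 < 1"
proof -
  have a1: "alpha g 1 x = g 1" for x by (simp add: alpha_def)
  have mu1: "mu g 1 = g 1 + g 2" by (simp add: mu_def)
  have mu3: "mu g 3 = g 1 + 3 * g 2 + 6 * g 3 + 6 * g 4" by (simp add: mu_def)
  have a23: "alpha g 2 3 = 3 * g 2" by (simp add: alpha_def)
  show "0 \<le> m1" unfolding m1_def a1 mu3 using g1 g2 g3 g4 by simp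
  have "g 1 / (g 1 + 3 * g 2 + 6 * g 3 + 6 * g 4) < g 1 / (g 1 + g 2)"
    using g1 g2 g3 g4 by (intro divide_strict_left_mono) auto
  moreover have "g 1 / (g 1 + 3 * g 2 + 6 * g 3 + 6 * g 4) < (g 1 + 3 * g 2) / (g 1 + 3 * g 2 + 6 * g 3 + 6 * g 4)"
    using g1 g2 g3 g4 by (intro divide_strict_right_mono) auto
  ultimately show "m1 < m2" unfolding m1_def m2_def a1 mu1 mu3 a23 by simp
  have "g 1 / (g 1 + g 2) < 1" using g1 g2 by simp
  then show "m2 < 1" unfolding m2_def a1 mu1 by linarith
qed

lemma mid1: "u < m2 \<Longrightarrow> stp g 1 u = 2"
proof -
  assume u: "u < m2"
  have "u < alpha g 1 1 / mu g 1" using u unfolding m2_def by linarith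
  then have "alpha g 1 1 > u * mu g 1" using mu_pos[of 1] by (simp add: field_simps)
  then have "kappa g 1 u = 1" unfolding kappa_eq Let_def mu_alpha[symmetric] by simp
  then show ?thesis by (simp add: stp_eq)
qed

lemma mid3: "m1 \<le> u \<Longrightarrow> u < m2 \<Longrightarrow> stp g 3 u = 2"
proof -
  assume u: "m1 \<le> u" "u < m2"
  have "u < (alpha g 1 3 + alpha g 2 3) / mu g 3" using u unfolding m2_def by linarith
  then have a: "alpha g 1 3 + alpha g 2 3 > u * mu g 3" using mu_pos[of 3] by (simp add: field_simps)
  have "alpha g 1 3 \<le> u * mu g 3" using u(1) mu_pos[of 3] unfolding m1_def by (simp add: field_simps)
  then have "kappa g 3 u = 2" using a unfolding kappa_eq Let_def mu_alpha[symmetric] by simp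
  then show ?thesis by (simp add: stp_eq)
qed

lemma mid_collapse:
  assumes u: "m1 \<le> u" "u < m2" and v: "m1 \<le> v" "v < m2" and ab: "a \<le> 3" "b \<le> 3" "even a = even b"
  shows "stp g (stp g a u) v = stp g (stp g b u) v"
proof -
  have u1: "u < 1" "v < 1" using u v m12 by auto
  have ev: "stp g (stp g a u) v = 2" if "a \<in> {0,2}" for a
  proof -
    have "stp g a u \<in> {1,3}" using that stp0[OF u1(1)] stp_lt1[OF u1(1), of 2] by auto
    then show ?thesis using mid1[OF v(2)] mid3[OF v] by auto
  qed
  have od: "stp g a u = 2" if "a \<in> {1,3}" for a
    using that mid1[OF u(2)] mid3[OF u] by auto
  have a4: "a = 0 \<or> a = 1 \<or> a = 2 \<or> a = 3" using ab(1) by presburger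
  have b4: "b = 0 \<or> b = 1 \<or> b = 2 \<or> b = 3" using ab(2) by presburger
  from a4 b4 show ?thesis using ev od ab(3) by (elim disjE) auto
qed

lemma down_phase:
  assumes K: "K \<ge> 3" and q: "\<And>j. j < K \<Longrightarrow> tau K \<le> q (int j) \<and> q (int j) < 1" and x: "x \<le> K"
  shows "j \<le> K \<Longrightarrow> phi g j q x \<le> max 3 (x - j)"
proof (induction j)
  case (Suc j)
  define w where "w = phi g j q x"
  have w: "w \<le> max 3 (x - j)" using Suc unfolding w_def by simp
  have u: "tau K \<le> q (int j)" "q (int j) < 1" using q[of j] Suc by auto
  show ?case
  proof (cases "w \<le> 2")
    case True
    then show ?thesis using stp_le[of g w "q (int j)"] unfolding w_def by simp
  next
    case False
    then have "stp g w (q (int j)) = w - 1" using w x K by (intro tau_down[OF _ _ u(1)]) auto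
    then show ?thesis using w False unfolding w_def by simp
  qed
qed simp

definition win :: "nat \<Rightarrow> (int \<Rightarrow> real) \<Rightarrow> bool" where
  "win K q \<longleftrightarrow> (\<forall>j<K. tau K \<le> q (int j) \<and> q (int j) < 1) \<and> m1 \<le> q (int K) \<and> q (int K) < m2
      \<and> m1 \<le> q (int K + 1) \<and> q (int K + 1) < m2"

lemma sync_det:
  assumes K: "K \<ge> 3" and q: "win K q" and xy: "x \<le> K" "y \<le> K" "even x = even y"
  shows "phi g (K + 2) q x = phi g (K + 2) q y"
proof -
  have qj: "\<And>j. j < K \<Longrightarrow> tau K \<le> q (int j) \<and> q (int j) < 1" using q unfolding win_def by auto
  have a: "phi g K q x \<le> 3" "phi g K q y \<le> 3"
    using down_phase[where K=K and q=q and x=x and j=K, OF K qj xy(1)]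
      down_phase[where K=K and q=q and x=y and j=K, OF K qj xy(2)] xy by auto
  have p: "even (phi g K q x) = even (phi g K q y)"
    using phi_par[of K q x] phi_par[of K q y] qj xy(3) by auto
  have "phi g (K + 2) q x = stp g (stp g (phi g K q x) (q (int K))) (q (int K + 1))"
    by (simp add: numeral_eq_Suc add.commute)
  also have "\<dots> = stp g (stp g (phi g K q y) (q (int K))) (q (int K + 1))"
    using q a p unfolding win_def by (intro mid_collapse) (auto simp: add.commute)
  also have "\<dots> = phi g (K + 2) q y" by (simp add: numeral_eq_Suc add.commute)
  finally show ?thesis .
qed

definition W :: "nat \<Rightarrow> nat \<Rightarrow> (int \<Rightarrow> real) set" where
  "W K k = {q \<in> space noise. win K ((shift ^^ k) q)}"

lemma win_eq: "win K q \<longleftrightarrow> (\<forall>i\<in>{0..int K + 1}. q i \<in> (if i < int K then {tau K..<1} else {m1..<m2}))"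
proof
  assume w: "win K q"
  show "\<forall>i\<in>{0..int K + 1}. q i \<in> (if i < int K then {tau K..<1} else {m1..<m2})"
  proof
    fix i assume i: "i \<in> {0..int K + 1}"
    show "q i \<in> (if i < int K then {tau K..<1} else {m1..<m2})"
    proof (cases "i < int K")
      case True
      obtain j where j: "i = int j" using i by (metis atLeastAtMost_iff nonneg_int_cases)
      then have "j < K" using True by simp
      then show ?thesis using w True unfolding win_def j by auto
    next
      case False
      then have "i = int K \<or> i = int K + 1" using i by auto
      then show ?thesis using w False unfolding win_def by auto
    qed
  qed
next
  assume a: "\<forall>i\<in>{0..int K + 1}. q i \<in> (if i < int K then {tau K..<1} else {m1..<m2})"
  have "tau K \<le> q (int j) \<and> q (int j) < 1" if "j < K" for j using a[rule_format, of "int j"] that by auto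
  moreover have "m1 \<le> q (int K) \<and> q (int K) < m2" using a[rule_format, of "int K"] by auto
  moreover have "m1 \<le> q (int K + 1) \<and> q (int K + 1) < m2" using a[rule_format, of "int K + 1"] by auto
  ultimately show "win K q" unfolding win_def by auto
qed

lemma mem_if: "(x \<in> (if c then A else B)) = ((c \<longrightarrow> x \<in> A) \<and> (\<not> c \<longrightarrow> x \<in> B))" by auto

lemma W_sets[measurable]: "W K k \<in> sets noise"
  unfolding W_def win_eq shiftn_apply mem_if atLeastLessThan_iff by measurable

lemma W_shift: "W K k = (shift ^^ k) -` W K 0 \<inter> space noise"
  unfolding W_def using shiftn_space by auto

lemma W_measure_shift: "measure noise (W K k) = measure noise (W K 0)"
  using measure_shiftn[OF W_sets[of K 0], of k] W_shift[of K k] by simp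

lemma W_pos: assumes K: "K \<ge> 3" shows "measure noise (W K 0) > 0"
proof -
  define X where "X i = (if i < int K then {tau K..<1} else {m1..<m2})" for i
  define len where "len i = (if i < int K then 1 - tau K else m2 - m1)" for i
  have tl1: "tau K < 1" using tau_lt1[OF K] .
  have tau0: "tau K \<ge> 0"
  proof -
    have "(alpha g 1 3 + alpha g 2 3 + alpha g 3 3) / mu g 3 \<le> tau K"
      unfolding tau_def using K by (intro Max_ge) auto
    moreover have "(alpha g 1 3 + alpha g 2 3 + alpha g 3 3) / mu g 3 \<ge> 0"
      using alpha_nonneg mu_pos[of 3] by simp
    ultimately show ?thesis by linarith
  qed
  have XM: "X i \<in> sets M0" for i unfolding X_def using tau0 m12 by (auto intro!: M0_sets)
  have Xm: "emeasure M0 (X i) = ennreal (len i)" for i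
  proof -
    have "emeasure M0 (X i) = emeasure lborel (X i)"
      unfolding M0_def X_def using tau0 m12 by (subst emeasure_restrict_space) auto
    then show ?thesis unfolding X_def len_def using tl1 m12 by (auto simp: emeasure_lborel_Ico)
  qed
  have lpos: "len i > 0" for i unfolding len_def using tl1 m12 by auto
  have "W K 0 = {q \<in> space (PiM UNIV (\<lambda>_. M0)). \<forall>i\<in>{0..int K + 1}. q i \<in> X i}"
    unfolding W_def win_eq X_def noise_M0 by simp
  then have "emeasure noise (W K 0) = (\<Prod>i\<in>{0..int K + 1}. emeasure M0 (X i))"
    unfolding noise_M0 using XM by (simp add: NP.emeasure_PiM_Collect)
  also have "\<dots> = ennreal (\<Prod>i\<in>{0..int K + 1}. len i)"
    unfolding Xm using lpos by (simp add: prod_ennreal less_imp_le)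
  finally have "measure noise (W K 0) = (\<Prod>i\<in>{0..int K + 1}. len i)"
    using lpos by (simp add: measure_def prod_nonneg less_imp_le)
  then show ?thesis using lpos by (simp add: prod_pos)
qed

lemma W_dep: "dep {int k..int k + int K + 1} (W K k)"
  unfolding dep_def W_def win_eq shiftn_apply by auto

lemma dep_phi2: "dep {i. 0 \<le> i \<and> i < int n} {q \<in> space noise. P (phi g n q x) (phi g n q y)}"
  unfolding dep_def
proof (intro conjI ballI impI)
  fix q q' assume q: "q \<in> space noise" "q' \<in> space noise" and a: "\<forall>i\<in>{i. 0 \<le> i \<and> i < int n}. q i = q' i"
  have "phi g n q x = phi g n q' x" "phi g n q y = phi g n q' y" by (rule phi_dep, use a in auto)+
  then show "q \<in> {q \<in> space noise. P (phi g n q x) (phi g n q y)} \<longleftrightarrow> q' \<in> {q \<in> space noise. P (phi g n q x) (phi g n q y)}"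
    using q by simp
qed auto

end

context schl begin

definition D :: "nat \<Rightarrow> nat \<Rightarrow> nat \<Rightarrow> (int \<Rightarrow> real) set" where
  "D x y n = {q \<in> space noise. phi g n q x \<noteq> phi g n q y}"

lemma D_sets[measurable]: "D x y n \<in> sets noise" unfolding D_def by measurable

lemma D_sym: "D x y n = D y x n" unfolding D_def by auto

lemma D_mono: "n \<le> n' \<Longrightarrow> measure noise (D x y n') \<le> measure noise (D x y n)"
proof -
  assume "n \<le> n'"
  then obtain m where m: "n' = n + m" using le_Suc_ex by blast
  show ?thesis unfolding m
  proof (rule measure_good_le)
    fix q assume "q \<in> D x y (n + m)"
    then show "q \<in> D x y n" unfolding D_def using phi_coal[of n q x y m] by auto
  qed auto
qed

lemma coal_step:
  assumes K: "K \<ge> 3" and xy: "x \<le> y" "even x = even y"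
    and hi: "measure noise {q \<in> space noise. phi g k q y > K} \<le> e"
  shows "measure noise (D x y (k + (K + 2))) \<le> measure noise (D x y k) - measure noise (W K 0) * (measure noise (D x y k) - e)"
proof -
  define L where "L = {q \<in> space noise. phi g k q x \<noteq> phi g k q y \<and> phi g k q y \<le> K}"
  define H where "H = {q \<in> space noise. phi g k q y > K}"
  have Ls[measurable]: "L \<in> sets noise" unfolding L_def by measurable
  have Hs[measurable]: "H \<in> sets noise" unfolding H_def by measurable
  have LWD: "L \<inter> W K k \<subseteq> D x y k" unfolding L_def D_def by auto
  have "measure noise (D x y (k + (K + 2))) \<le> measure noise (D x y k - (L \<inter> W K k))"
  proof (rule measure_good_le)
    fix q assume q: "q \<in> D x y (k + (K + 2))" and gq: "good q"
    have qs: "q \<in> space noise" and neq: "phi g (k + (K + 2)) q x \<noteq> phi g (k + (K + 2)) q y"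
      using q unfolding D_def by auto
    have "q \<in> D x y k" using phi_coal[of k q x y "K + 2"] neq qs unfolding D_def by auto
    moreover have "q \<notin> L \<inter> W K k"
    proof
      assume "q \<in> L \<inter> W K k"
      then have qL: "phi g k q y \<le> K" and qW: "win K ((shift ^^ k) q)" unfolding L_def W_def by auto
      have c: "\<And>j. j < k \<Longrightarrow> q (int j) < 1" using gq unfolding good_def by auto
      have le: "phi g k q x \<le> phi g k q y" by (rule phi_mono[where n=k and q=q]) (use c xy in auto)
      have par: "even (phi g k q x) = even (phi g k q y)"
        using phi_par[of k q x, OF c] phi_par[of k q y, OF c] xy(2) by auto
      have "phi g (k + (K + 2)) q x = phi g (K + 2) ((shift ^^ k) q) (phi g k q x)" by (rule phi_add)
      also have "\<dots> = phi g (K + 2) ((shift ^^ k) q) (phi g k q y)"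
        by (rule sync_det[OF K qW]) (use le qL par in auto)
      also have "\<dots> = phi g (k + (K + 2)) q y" by (rule phi_add[symmetric])
      finally show False using neq by simp
    qed
    ultimately show "q \<in> D x y k - (L \<inter> W K k)" by simp
  qed auto
  also have "\<dots> = measure noise (D x y k) - measure noise (L \<inter> W K k)"
    using LWD by (intro N.finite_measure_Diff) auto
  also have "measure noise (L \<inter> W K k) = measure noise L * measure noise (W K k)"
  proof (rule indep_events[where A = "{i. 0 \<le> i \<and> i < int k}" and B = "{int k..int k + int K + 1}"])
    show "dep {i. 0 \<le> i \<and> i < int k} L"
      using dep_phi2[of k "\<lambda>a b. a \<noteq> b \<and> b \<le> K" x y] unfolding L_def by simp
    show "dep {int k..int k + int K + 1} (W K k)" by (rule W_dep)
  qed auto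
  also have "measure noise (W K k) = measure noise (W K 0)" by (rule W_measure_shift)
  finally have 1: "measure noise (D x y (k + (K + 2))) \<le> measure noise (D x y k) - measure noise L * measure noise (W K 0)" .
  have "D x y k \<subseteq> L \<union> H" unfolding D_def L_def H_def by auto
  then have "measure noise (D x y k) \<le> measure noise (L \<union> H)" by (intro N.finite_measure_mono) auto
  also have "\<dots> \<le> measure noise L + measure noise H" by (intro measure_Un_le) auto
  finally have "measure noise (D x y k) - e \<le> measure noise L" using hi unfolding H_def by linarith
  then have "(measure noise (D x y k) - e) * measure noise (W K 0) \<le> measure noise L * measure noise (W K 0)"
    by (intro mult_right_mono) auto
  then show ?thesis using 1 by (simp add: algebra_simps)
qed

lemma coal_le:
  assumes xy: "x \<le> y" "even x = even y"
  shows "(\<lambda>n. measure noise (D x y n)) \<longlonglongrightarrow> 0"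
proof (rule LIMSEQ_I)
  fix r :: real assume r: "r > 0"
  show "\<exists>no. \<forall>n\<ge>no. norm (measure noise (D x y n) - 0) < r"
  proof (rule ccontr)
    assume "\<not> (\<exists>no. \<forall>n\<ge>no. norm (measure noise (D x y n) - 0) < r)"
    then have ex: "\<forall>no. \<exists>n\<ge>no. measure noise (D x y n) \<ge> r" by (auto simp: not_less)
    have big: "measure noise (D x y n) \<ge> r" for n
      using ex[rule_format, of n] D_mono by (meson order.trans)
    have "\<forall>\<^sub>F K in sequentially. tl K < r / 2 * pi y"
      using order_tendstoD(2)[OF tl_tendsto, of "r / 2 * pi y"] r pi_pos[of y] by auto
    then obtain K0 where K0: "\<And>K. K \<ge> K0 \<Longrightarrow> tl K < r / 2 * pi y" by (auto simp: eventually_sequentially)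
    define K where "K = max 3 K0"
    have K3: "K \<ge> 3" unfolding K_def by simp
    have hi: "measure noise {q \<in> space noise. phi g k q y > K} \<le> r / 2" for k
    proof -
      have "tl K < r / 2 * pi y" using K0[of K] unfolding K_def by simp
      then have "tl K / pi y \<le> r / 2" using pi_pos[of y] by (simp add: pos_divide_le_eq)
      then show ?thesis using tail_bound[of K k y] by linarith
    qed
    define p where "p = measure noise (W K 0)"
    have p: "p > 0" unfolding p_def by (rule W_pos[OF K3])
    have step: "measure noise (D x y (k + (K + 2))) \<le> measure noise (D x y k) - p * (r / 2)" for k
    proof -
      have "measure noise (D x y (k + (K + 2))) \<le> measure noise (D x y k) - p * (measure noise (D x y k) - r / 2)"
        unfolding p_def by (rule coal_step[OF K3 xy hi])
      moreover have "p * (r / 2) \<le> p * (measure noise (D x y k) - r / 2)"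
        using big[of k] p by (intro mult_left_mono) auto
      ultimately show ?thesis by linarith
    qed
    have ind: "measure noise (D x y (j * (K + 2))) \<le> 1 - real j * (p * (r / 2))" for j
    proof (induction j)
      case 0 then show ?case by simp
    next
      case (Suc j)
      have e: "Suc j * (K + 2) = j * (K + 2) + (K + 2)" by simp
      have a: "measure noise (D x y (Suc j * (K + 2))) \<le> measure noise (D x y (j * (K + 2))) - p * (r / 2)"
        unfolding e by (rule step)
      have "real (Suc j) * (p * (r / 2)) = real j * (p * (r / 2)) + p * (r / 2)" by (simp add: algebra_simps)
      then show ?case using a Suc.IH by linarith
    qed
    obtain j :: nat where j: "1 < real j * (p * (r / 2))" using ex_less_of_nat_mult[of "p * (r / 2)" 1] p r by auto
    have "measure noise (D x y (j * (K + 2))) < 0" using ind[of j] j by linarith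
    then show False by (simp add: not_less)
  qed
qed

lemma coal:
  assumes "even x = even y"
  shows "(\<lambda>n. measure noise {q \<in> space noise. phi g n q x \<noteq> phi g n q y}) \<longlonglongrightarrow> 0"
proof (cases "x \<le> y")
  case True
  show ?thesis using coal_le[OF True assms] by (simp add: D_def)
next
  case False
  then have "y \<le> x" by simp
  have "(\<lambda>n. measure noise (D y x n)) \<longlonglongrightarrow> 0" using coal_le[OF \<open>y \<le> x\<close>] assms by simp
  then show ?thesis unfolding D_sym[of y x] by (simp add: D_def)
qed

end

lemma mono_bdd_eventually:
  fixes s :: "nat \<Rightarrow> nat"
  assumes m: "incseq s" and b: "bdd_above (range s)"
  shows "\<exists>M. \<forall>m\<ge>M. s m = (LEAST k. \<forall>m. s m \<le> k)"
proof -
  define L where "L = (LEAST k. \<forall>m. s m \<le> k)"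
  obtain B where B: "\<forall>m. s m \<le> B" using b by (auto simp: bdd_above_def)
  have L: "\<forall>m. s m \<le> L" unfolding L_def by (rule LeastI[of _ B]) (rule B)
  show ?thesis
  proof (cases "L = 0")
    case True
    then show ?thesis using L unfolding L_def[symmetric] by auto
  next
    case False
    have "\<not> (\<forall>m. s m \<le> L - 1)"
    proof
      assume "\<forall>m. s m \<le> L - 1"
      then have "L \<le> L - 1" unfolding L_def by (rule Least_le)
      then show False using False by simp
    qed
    then obtain M where M: "s M > L - 1" by (auto simp: not_le)
    have "\<forall>m\<ge>M. s m = L"
    proof (intro allI impI)
      fix m assume "m \<ge> M"
      then have "s M \<le> s m" using m by (simp add: incseq_def)
      then show "s m = L" using M L[rule_format, of m] by linarith
    qed
    then show ?thesis unfolding L_def by blast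
  qed
qed

lemma bdd_nat: "bdd_above (range (s :: nat \<Rightarrow> nat)) \<longleftrightarrow> (\<exists>K. \<forall>m. s m \<le> K)"
  by (auto simp: bdd_above_def)

context schl begin

definition c :: "nat \<Rightarrow> (int \<Rightarrow> real) \<Rightarrow> nat" where
  "c n q = phi g n ((ishift ^^ n) q) 0"

lemma c_meas[measurable]: "c n \<in> noise \<rightarrow>\<^sub>M count_space UNIV"
  unfolding c_def by (rule measurable_compose[OF ishiftn_meas phi_meas])

lemma ishift_shift: "(ishift ^^ Suc n) (shift q) = (ishift ^^ n) q"
  by (simp add: ishiftn_apply shift_def del: funpow.simps)

lemma c_Suc_shift: "c (Suc n) (shift q) = stp g (c n q) (q 0)"
  unfolding c_def ishift_shift by (simp add: ishiftn_apply del: funpow.simps)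

lemma shift2_ishift: "(shift ^^ m) ((ishift ^^ (m + n)) q) = (ishift ^^ n) q"
  by (simp add: ishiftn_apply shiftn_apply)

lemma c_mono2: "good q \<Longrightarrow> c n q \<le> c (n + 2) q"
proof -
  assume gq: "good q"
  define r where "r = (ishift ^^ (2 + n)) q"
  have gr: "good r" unfolding r_def using gq by (rule good_ishiftn)
  have "c (n + 2) q = phi g (2 + n) r 0" unfolding c_def r_def by (simp add: add.commute)
  also have "\<dots> = phi g n ((ishift ^^ n) q) (phi g 2 r 0)"
    unfolding phi_add r_def shift2_ishift ..
  finally have e: "c (n + 2) q = phi g n ((ishift ^^ n) q) (phi g 2 r 0)" .
  have "even (phi g 2 r 0)" using phi_par[of 2 r 0] gr unfolding good_def by auto
  moreover have gi: "good ((ishift ^^ n) q)" using gq by (rule good_ishiftn)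
  ultimately have "phi g n ((ishift ^^ n) q) 0 \<le> phi g n ((ishift ^^ n) q) (phi g 2 r 0)"
    by (intro phi_mono) (auto simp: good_def)
  then show ?thesis using e unfolding c_def by simp
qed

lemma c_par: "good q \<Longrightarrow> even (c n q) = even n"
  unfolding c_def using phi_par[of n "(ishift ^^ n) q" 0] good_ishiftn[of q n] by (auto simp: good_def)

lemma c_odd: "good q \<Longrightarrow> c (Suc n) q = phi g n ((ishift ^^ n) q) 1"
proof -
  assume gq: "good q"
  define r where "r = (ishift ^^ (1 + n)) q"
  have "c (Suc n) q = phi g (1 + n) r 0" unfolding c_def r_def by simp
  also have "\<dots> = phi g n ((ishift ^^ n) q) (phi g 1 r 0)"
    unfolding phi_add r_def shift2_ishift ..
  also have "phi g 1 r 0 = 1" using good_ishiftn[OF gq, of "1 + n"] stp0 unfolding r_def good_def by simp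
  finally show ?thesis .
qed

lemma incseq_even: "good q \<Longrightarrow> incseq (\<lambda>m. c (2 * m) q)"
proof (rule incseq_SucI)
  fix m assume "good q"
  have e: "2 * Suc m = 2 * m + 2" by simp
  show "c (2 * m) q \<le> c (2 * Suc m) q" unfolding e by (rule c_mono2) fact
qed
lemma incseq_odd: "good q \<Longrightarrow> incseq (\<lambda>m. c (2 * m + 1) q)"
proof (rule incseq_SucI)
  fix m assume "good q"
  have e: "2 * Suc m + 1 = (2 * m + 1) + 2" by simp
  show "c (2 * m + 1) q \<le> c (2 * Suc m + 1) q" unfolding e by (rule c_mono2) fact
qed

definition fin :: "(int \<Rightarrow> real) \<Rightarrow> bool" where
  "fin q \<longleftrightarrow> (\<exists>K. \<forall>m. c (2 * m) q \<le> K) \<and> (\<exists>K. \<forall>m. c (2 * m + 1) q \<le> K)"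

definition a :: "(int \<Rightarrow> real) \<Rightarrow> nat" where "a q = (LEAST k. \<forall>m. c (2 * m) q \<le> k)"
definition b :: "(int \<Rightarrow> real) \<Rightarrow> nat" where "b q = (LEAST k. \<forall>m. c (2 * m + 1) q \<le> k)"

definition GG :: "(int \<Rightarrow> real) \<Rightarrow> bool" where "GG q \<longleftrightarrow> good q \<and> fin q"

definition AA :: "(int \<Rightarrow> real) \<Rightarrow> nat set" where
  "AA q = (if GG q then {a q, b q} else {0})"

lemma good_meas[measurable]: "Measurable.pred noise good"
  unfolding good_def by measurable
lemma fin_meas[measurable]: "Measurable.pred noise fin"
  unfolding fin_def by measurable
lemma GG_meas[measurable]: "Measurable.pred noise GG"
  unfolding GG_def by measurable
lemma a_meas[measurable]: "a \<in> noise \<rightarrow>\<^sub>M count_space UNIV"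
  unfolding a_def by measurable
lemma b_meas[measurable]: "b \<in> noise \<rightarrow>\<^sub>M count_space UNIV"
  unfolding b_def by measurable

lemma ev_a: "GG q \<Longrightarrow> \<exists>M. \<forall>m\<ge>M. c (2 * m) q = a q"
  unfolding a_def GG_def fin_def
  by (rule mono_bdd_eventually[OF incseq_even]) (auto simp: bdd_nat)
lemma ev_b: "GG q \<Longrightarrow> \<exists>M. \<forall>m\<ge>M. c (2 * m + 1) q = b q"
  unfolding b_def GG_def fin_def
  by (rule mono_bdd_eventually[OF incseq_odd]) (auto simp: bdd_nat)

lemma ev_unique: "\<forall>m\<ge>(M1::nat). (s::nat \<Rightarrow> nat) m = (u::nat) \<Longrightarrow> \<forall>m\<ge>M2. s m = v \<Longrightarrow> u = v"
proof -
  assume h1: "\<forall>m\<ge>M1. s m = u" and h2: "\<forall>m\<ge>M2. s m = v"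
  have "s (max M1 M2) = u" using h1 by simp
  moreover have "s (max M1 M2) = v" using h2 by simp
  ultimately show ?thesis by simp
qed

lemma GG_shift:
  assumes G: "GG q"
  shows "GG (shift q)" "a (shift q) = stp g (b q) (q 0)" "b (shift q) = stp g (a q) (q 0)"
proof -
  obtain Ma where Ma: "\<forall>m\<ge>Ma. c (2 * m) q = a q" using ev_a[OF G] by blast
  obtain Mb where Mb: "\<forall>m\<ge>Mb. c (2 * m + 1) q = b q" using ev_b[OF G] by blast
  have gq: "good q" using G by (simp add: GG_def)
  have gs: "good (shift q)" using good_shiftn[OF gq, of 1] by simp
  obtain Ka where Ka: "\<forall>m. c (2 * m) q \<le> Ka" using G by (auto simp: GG_def fin_def)
  obtain Kb where Kb: "\<forall>m. c (2 * m + 1) q \<le> Kb" using G by (auto simp: GG_def fin_def)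
  have e1: "c (2 * Suc m) (shift q) = stp g (c (2 * m + 1) q) (q 0)" for m
    using c_Suc_shift[of "2 * m + 1" q] by simp
  have e0: "c (2 * m + 1) (shift q) = stp g (c (2 * m) q) (q 0)" for m
    using c_Suc_shift[of "2 * m" q] by simp
  have "c (2 * m) (shift q) \<le> Suc Kb" for m
  proof (cases m)
    case 0 then show ?thesis by (simp add: c_def)
  next
    case (Suc m')
    have "c (2 * m) (shift q) = stp g (c (2 * m' + 1) q) (q 0)" using e1[of m'] Suc by simp
    also have "\<dots> \<le> Suc (c (2 * m' + 1) q)" by (rule stp_le)
    also have "\<dots> \<le> Suc Kb" using Kb by simp
    finally show ?thesis .
  qed
  moreover have "c (2 * m + 1) (shift q) \<le> Suc Ka" for m
  proof -
    have "c (2 * m + 1) (shift q) = stp g (c (2 * m) q) (q 0)" by (rule e0)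
    also have "\<dots> \<le> Suc (c (2 * m) q)" by (rule stp_le)
    also have "\<dots> \<le> Suc Ka" using Ka by simp
    finally show ?thesis .
  qed
  ultimately show G': "GG (shift q)" unfolding GG_def fin_def using gs by blast
  obtain Ma' where Ma': "\<forall>m\<ge>Ma'. c (2 * m) (shift q) = a (shift q)" using ev_a[OF G'] by blast
  obtain Mb' where Mb': "\<forall>m\<ge>Mb'. c (2 * m + 1) (shift q) = b (shift q)" using ev_b[OF G'] by blast
  have "\<forall>m\<ge>Suc Mb. c (2 * m) (shift q) = stp g (b q) (q 0)"
  proof (intro allI impI)
    fix m assume "m \<ge> Suc Mb"
    then obtain m' where m: "m = Suc m'" "m' \<ge> Mb" by (cases m) auto
    show "c (2 * m) (shift q) = stp g (b q) (q 0)" using e1[of m'] Mb m by simp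
  qed
  then show "a (shift q) = stp g (b q) (q 0)" using Ma' by (intro ev_unique) auto
  have "\<forall>m\<ge>Ma. c (2 * m + 1) (shift q) = stp g (a q) (q 0)"
    using e0 Ma by simp
  then show "b (shift q) = stp g (a q) (q 0)" using Mb' by (intro ev_unique) auto
qed

lemma AA_shift: "GG q \<Longrightarrow> fstep g q ` AA q = AA (shift q)"
  using GG_shift[of q] unfolding AA_def by (auto simp: fstep_stp)

lemma GG_shiftn: "GG q \<Longrightarrow> GG ((shift ^^ n) q)"
  by (induction n) (auto simp: GG_shift(1))

lemma AA_inv: "GG q \<Longrightarrow> phi g n q ` AA q = AA ((shift ^^ n) q)"
proof (induction n)
  case 0 then show ?case by simp
next
  case (Suc n)
  have "phi g (Suc n) q ` AA q = fstep g ((shift ^^ n) q) ` (phi g n q ` AA q)"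
    by (simp add: phi.simps(2) image_comp del: phi_Suc')
  also have "\<dots> = fstep g ((shift ^^ n) q) ` AA ((shift ^^ n) q)" using Suc by simp
  also have "\<dots> = AA (shift ((shift ^^ n) q))" by (rule AA_shift[OF GG_shiftn[OF Suc.prems]])
  finally show ?case by simp
qed

end

lemma measure_le_AE:
  assumes "S \<in> sets noise" "T \<in> sets noise" "AE q in noise. P q" "\<And>q. q \<in> S \<Longrightarrow> P q \<Longrightarrow> q \<in> T"
  shows "measure noise S \<le> measure noise T"
proof -
  from assms(3) obtain N where N: "{q \<in> space noise. \<not> P q} \<subseteq> N" "emeasure noise N = 0" "N \<in> sets noise"
    by (rule AE_E)
  have "S \<subseteq> T \<union> N" using assms(1,4) N(1) sets.sets_into_space[OF assms(1)] by blast
  then have "measure noise S \<le> measure noise (T \<union> N)"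
    using assms(1,2) N(3) by (intro N.finite_measure_mono) auto
  also have "\<dots> = measure noise T" using assms(2) N(2,3) by (intro measure_Un_null_set) auto
  finally show ?thesis .
qed

lemma pt_dist_mem: "x \<in> T \<Longrightarrow> pt_dist x T = 0"
  unfolding pt_dist_def by (rule cInf_eq_minimum) auto

lemma pt_dist2: "pt_dist x {u, v} = min \<bar>real x - real u\<bar> \<bar>real x - real v\<bar>"
  unfolding pt_dist_def by (simp add: cInf_eq_Min)

lemma pt_dist1: "pt_dist x {u} = \<bar>real x - real u\<bar>"
  unfolding pt_dist_def by simp

lemma set_dist_gt:
  assumes "finite S" "e > 0"
  shows "set_dist S T > e \<longleftrightarrow> (\<exists>s\<in>S. pt_dist s T > e)"
proof -
  have "set_dist S T = Max (insert 0 ((\<lambda>x. pt_dist x T) ` S))"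
    unfolding set_dist_def using assms(1) by (simp add: cSup_eq_Max)
  then show ?thesis using assms by (simp add: Max_gr_iff)
qed

context schl begin

lemma c_tail: "measure noise {q \<in> space noise. c n q > K} \<le> tl K / pi 0"
proof -
  have s: "{q \<in> space noise. phi g n q 0 > K} \<in> sets noise" by measurable
  have "{q \<in> space noise. c n q > K} = (ishift ^^ n) -` {q \<in> space noise. phi g n q 0 > K} \<inter> space noise"
    unfolding c_def using ishiftn_space by auto
  then have "measure noise {q \<in> space noise. c n q > K} = measure noise {q \<in> space noise. phi g n q 0 > K}"
    using measure_ishiftn[OF s, of n] by simp
  then show ?thesis using tail_bound[of K n 0] by simp
qed

lemma tail_union:
  assumes inc: "\<And>q. good q \<Longrightarrow> incseq (\<lambda>m. s m q)" and sm[measurable]: "\<And>m. s m \<in> noise \<rightarrow>\<^sub>M count_space UNIV"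
    and bnd: "\<And>m. measure noise {q \<in> space noise. s m q > K} \<le> C"
  shows "measure noise {q \<in> space noise. good q \<and> (\<exists>m. s m q > K)} \<le> C"
proof -
  define U where "U M = {q \<in> space noise. good q \<and> s M q > K}" for M
  have Us: "range U \<subseteq> sets noise" unfolding U_def by auto
  have incU: "incseq U"
  proof (rule incseq_SucI)
    fix M show "U M \<subseteq> U (Suc M)" unfolding U_def using inc by (auto simp: incseq_Suc_iff intro: less_le_trans)
  qed
  have lim: "(\<lambda>M. measure noise (U M)) \<longlonglongrightarrow> measure noise (\<Union>M. U M)"
    by (rule N.finite_Lim_measure_incseq[OF Us incU])
  have "measure noise (U M) \<le> C" for M
    using bnd[of M] by (rule order.trans[rotated]) (auto simp: U_def intro!: N.finite_measure_mono)
  then have "measure noise (\<Union>M. U M) \<le> C" by (intro LIMSEQ_le_const2[OF lim]) auto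
  moreover have "(\<Union>M. U M) = {q \<in> space noise. good q \<and> (\<exists>m. s m q > K)}" unfolding U_def by auto
  ultimately show ?thesis by simp
qed

lemma nfin_null: "{q \<in> space noise. good q \<and> \<not> fin q} \<in> null_sets noise"
proof -
  define S where "S = {q \<in> space noise. good q \<and> \<not> fin q}"
  have Ss: "S \<in> sets noise" unfolding S_def by measurable
  have b: "measure noise S \<le> 2 * (tl K / pi 0)" for K
  proof -
    have "S \<subseteq> {q \<in> space noise. good q \<and> (\<exists>m. c (2 * m) q > K)} \<union> {q \<in> space noise. good q \<and> (\<exists>m. c (2 * m + 1) q > K)}"
      unfolding S_def fin_def by (auto simp: not_le)
    then have "measure noise S \<le> measure noise ({q \<in> space noise. good q \<and> (\<exists>m. c (2 * m) q > K)} \<union> {q \<in> space noise. good q \<and> (\<exists>m. c (2 * m + 1) q > K)})"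
      by (intro N.finite_measure_mono) auto
    also have "\<dots> \<le> measure noise {q \<in> space noise. good q \<and> (\<exists>m. c (2 * m) q > K)} + measure noise {q \<in> space noise. good q \<and> (\<exists>m. c (2 * m + 1) q > K)}"
      by (intro measure_Un_le) auto
    also have "\<dots> \<le> tl K / pi 0 + tl K / pi 0"
      by (intro add_mono tail_union[where s = "\<lambda>m. c (2 * m)"] tail_union[where s = "\<lambda>m. c (2 * m + 1)"] incseq_even incseq_odd c_tail) auto
    finally show ?thesis by simp
  qed
  have lim: "(\<lambda>K. 2 * (tl K / pi 0)) \<longlonglongrightarrow> 0"
    using tendsto_mult_right_zero[OF tendsto_divide_zero[OF tl_tendsto, of "pi 0"], of 2] by simp
  have "measure noise S \<le> 0" by (rule LIMSEQ_le_const[OF lim]) (use b in auto)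
  then have "measure noise S = 0" using measure_nonneg[of noise S] by linarith
  then show ?thesis using Ss unfolding S_def[symmetric] by (simp add: N.emeasure_eq_measure null_sets_def)
qed

lemma GG_AE: "AE q in noise. GG q"
proof -
  have "{q \<in> space noise. \<not> GG q} \<subseteq> {q \<in> space noise. \<not> good q} \<union> {q \<in> space noise. good q \<and> \<not> fin q}"
    unfolding GG_def by auto
  moreover have "{q \<in> space noise. \<not> good q} \<union> {q \<in> space noise. good q \<and> \<not> fin q} \<in> null_sets noise"
    using bad_null nfin_null by auto
  ultimately show ?thesis by (intro AE_I') auto
qed

lemma ra_meas[measurable]: "(\<lambda>q. real (a q)) \<in> borel_measurable noise"
  by (rule measurable_compose[OF a_meas]) simp
lemma rb_meas[measurable]: "(\<lambda>q. real (b q)) \<in> borel_measurable noise"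
  by (rule measurable_compose[OF b_meas]) simp

lemma pt_dist_AA: "pt_dist x (AA q) = (if GG q then min \<bar>real x - real (a q)\<bar> \<bar>real x - real (b q)\<bar> else real x)"
  unfolding AA_def by (simp add: pt_dist2 pt_dist1)

lemma pt_dist_AA_meas[measurable]: "(\<lambda>q. pt_dist x (AA q)) \<in> borel_measurable noise"
  unfolding pt_dist_AA by measurable

lemma pt_dist_phi_meas[measurable]: "(\<lambda>q. pt_dist (phi g n q x) (AA ((shift ^^ n) q))) \<in> borel_measurable noise"
proof -
  have "(\<lambda>q. pt_dist y (AA ((shift ^^ n) q))) \<in> borel_measurable noise" for y
    by (rule measurable_compose[OF shiftn_meas pt_dist_AA_meas])
  then show ?thesis by (rule measurable_compose_countable[OF _ phi_meas])
qed

lemma AA_mem_meas[measurable]: "Measurable.pred noise (\<lambda>q. y \<in> AA q)"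
proof -
  have "(\<lambda>q. y \<in> AA q) = (\<lambda>q. if GG q then y = a q \<or> y = b q else y = 0)" unfolding AA_def by auto
  then show ?thesis by simp
qed

lemma phi_ish_meas[measurable]: "(\<lambda>q. phi g n ((ishift ^^ n) q) x) \<in> noise \<rightarrow>\<^sub>M count_space UNIV"
  by (rule measurable_compose[OF ishiftn_meas phi_meas])

lemma c_notin_meas[measurable]: "Measurable.pred noise (\<lambda>q. c m q \<notin> AA q)"
proof -
  have "Measurable.pred noise (\<lambda>q. (\<lambda>y q. y \<notin> AA q) (c m q) q)"
    by (rule measurable_compose_countable[OF _ c_meas]) simp
  then show ?thesis by simp
qed

lemma miss_tendsto: "(\<lambda>n. measure noise {q \<in> space noise. phi g n q x \<notin> AA ((shift ^^ n) q)}) \<longlonglongrightarrow> 0"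
proof -
  define x0 where "x0 = x mod 2"
  have px: "even x = even x0" unfolding x0_def by simp
  have x01: "x0 = 0 \<or> x0 = 1" unfolding x0_def by auto
  have memAA: "Measurable.pred noise (\<lambda>q. y \<in> AA q)" for y by simp
  define S where "S n = {q \<in> space noise. phi g n q x \<notin> AA ((shift ^^ n) q)}" for n
  define P where "P n = {q \<in> space noise. phi g n q x \<noteq> phi g n q x0}" for n
  define T where "T n = {q \<in> space noise. GG q \<and> (\<exists>m\<ge>n. c m q \<notin> AA q)}" for n
  have AAs: "{q \<in> space noise. y \<notin> AA q} \<in> sets noise" for y using memAA[of y] by measurable
  have S'eq: "(ishift ^^ n) -` S n \<inter> space noise = {q \<in> space noise. phi g n ((ishift ^^ n) q) x \<notin> AA q}" for n
    unfolding S_def using ishiftn_space by (auto simp: shift_ishift)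
  have Ss: "S n \<in> sets noise" for n
  proof -
    have "(\<lambda>q. phi g n q x \<notin> AA ((shift ^^ n) q)) = (\<lambda>q. (\<lambda>y q. y \<notin> AA ((shift ^^ n) q)) (phi g n q x) q)" by simp
    moreover have "Measurable.pred noise (\<lambda>q. (\<lambda>y q. y \<notin> AA ((shift ^^ n) q)) (phi g n q x) q)"
    proof (rule measurable_compose_countable[OF _ phi_meas])
      fix y show "Measurable.pred noise (\<lambda>q. y \<notin> AA ((shift ^^ n) q))"
        using measurable_compose[OF shiftn_meas memAA[of y]] by (simp add: pred_def)
    qed
    ultimately show ?thesis unfolding S_def by (simp add: pred_def)
  qed
  have S'm: "measure noise (S n) = measure noise {q \<in> space noise. phi g n ((ishift ^^ n) q) x \<notin> AA q}" for n
    using measure_ishiftn[OF Ss[of n], of n] S'eq[of n] by simp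
  have Pm: "measure noise {q \<in> space noise. phi g n ((ishift ^^ n) q) x \<noteq> phi g n ((ishift ^^ n) q) x0} = measure noise (P n)" for n
  proof -
    have s: "P n \<in> sets noise" unfolding P_def by measurable
    have "(ishift ^^ n) -` P n \<inter> space noise = {q \<in> space noise. phi g n ((ishift ^^ n) q) x \<noteq> phi g n ((ishift ^^ n) q) x0}"
      unfolding P_def using ishiftn_space by auto
    then show ?thesis using measure_ishiftn[OF s, of n] by simp
  qed
  have Ps: "P n \<in> sets noise" for n unfolding P_def by measurable
  have Pt: "(\<lambda>n. measure noise (P n)) \<longlonglongrightarrow> 0" unfolding P_def by (rule coal[OF px])
  have Ts: "T n \<in> sets noise" for n unfolding T_def by measurable
  have decT: "decseq T" unfolding decseq_def T_def by (blast intro: order_trans)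
  have Tempty: "(\<Inter>n. T n) = {}"
  proof -
    have Tq: "q \<notin> T (2 * (Ma + Mb) + 2)" if Ma: "\<forall>m\<ge>Ma. c (2 * m) q = a q" and Mb: "\<forall>m\<ge>Mb. c (2 * m + 1) q = b q"
      and G: "GG q" for q Ma Mb
    proof -
      have "c m q \<in> AA q" if m: "m \<ge> 2 * (Ma + Mb) + 2" for m
      proof (cases "even m")
        case True
        then obtain k where k: "m = 2 * k" by blast
        then have "k \<ge> Ma" using m by simp
        then show ?thesis using Ma k G unfolding AA_def by auto
      next
        case False
        then obtain k where k: "m = 2 * k + 1" using oddE by blast
        then have "k \<ge> Mb" using m by simp
        then show ?thesis using Mb k G unfolding AA_def by auto
      qed
      then show ?thesis unfolding T_def by auto
    qed
    have T0: "q \<notin> T 0" if "\<not> GG q" for q using that unfolding T_def by auto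
    have "q \<notin> (\<Inter>n. T n)" for q
    proof (cases "GG q")
      case True
      obtain Ma where "\<forall>m\<ge>Ma. c (2 * m) q = a q" using ev_a[OF True] by blast
      moreover obtain Mb where "\<forall>m\<ge>Mb. c (2 * m + 1) q = b q" using ev_b[OF True] by blast
      ultimately show ?thesis using Tq True by blast
    qed (use T0 in blast)
    then show ?thesis by blast
  qed
  have Tt: "(\<lambda>n. measure noise (T n)) \<longlonglongrightarrow> 0"
    using N.finite_Lim_measure_decseq[of T] Ts decT Tempty by auto
  have bound: "measure noise (S n) \<le> measure noise (P n) + measure noise (T n)" for n
  proof -
    have "measure noise (S n) \<le> measure noise ({q \<in> space noise. phi g n ((ishift ^^ n) q) x \<noteq> phi g n ((ishift ^^ n) q) x0} \<union> T n)"
      unfolding S'm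
    proof (rule measure_le_AE[OF _ _ GG_AE])
      show "{q \<in> space noise. phi g n ((ishift ^^ n) q) x \<notin> AA q} \<in> sets noise"
        using measurable_sets[OF ishiftn_meas[of n] Ss[of n]] S'eq[of n] by simp
      show "{q \<in> space noise. phi g n ((ishift ^^ n) q) x \<noteq> phi g n ((ishift ^^ n) q) x0} \<union> T n \<in> sets noise"
        using Ts[of n] by (intro sets.Un) simp_all
      fix q assume q: "q \<in> {q \<in> space noise. phi g n ((ishift ^^ n) q) x \<notin> AA q}" and G: "GG q"
      show "q \<in> {q \<in> space noise. phi g n ((ishift ^^ n) q) x \<noteq> phi g n ((ishift ^^ n) q) x0} \<union> T n"
      proof (cases "phi g n ((ishift ^^ n) q) x = phi g n ((ishift ^^ n) q) x0")
        case True
        have gq: "good q" using G by (simp add: GG_def)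
        have e0: "phi g n ((ishift ^^ n) q) 0 = c n q" by (simp only: c_def)
        have e1: "phi g n ((ishift ^^ n) q) 1 = c (Suc n) q" using c_odd[OF gq, of n] by (rule sym)
        have "phi g n ((ishift ^^ n) q) x0 = c n q \<or> phi g n ((ishift ^^ n) q) x0 = c (Suc n) q"
          using x01 e0 e1 by (elim disjE) simp_all
        then have "\<exists>m\<ge>n. c m q \<notin> AA q"
        proof
          assume "phi g n ((ishift ^^ n) q) x0 = c n q"
          then show ?thesis using True q by (intro exI[of _ n]) auto
        next
          assume "phi g n ((ishift ^^ n) q) x0 = c (Suc n) q"
          then show ?thesis using True q by (intro exI[of _ "Suc n"]) auto
        qed
        then show ?thesis using q G unfolding T_def by auto
      qed (use q in auto)
    qed
    also have "\<dots> \<le> measure noise {q \<in> space noise. phi g n ((ishift ^^ n) q) x \<noteq> phi g n ((ishift ^^ n) q) x0} + measure noise (T n)"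
      using Ts by (intro measure_Un_le) auto
    finally show ?thesis unfolding Pm .
  qed
  have "(\<lambda>n. measure noise (P n) + measure noise (T n)) \<longlonglongrightarrow> 0"
    using tendsto_add[OF Pt Tt] by simp
  then have "(\<lambda>n. measure noise (S n)) \<longlonglongrightarrow> 0"
    by (rule tendsto_sandwich[rotated 2, OF tendsto_const]) (use bound in \<open>auto intro!: always_eventually\<close>)
  then show ?thesis unfolding S_def .
qed

end

lemma pt_dist_Min: "finite T \<Longrightarrow> T \<noteq> {} \<Longrightarrow> \<exists>y\<in>T. pt_dist x T = \<bar>real x - real y\<bar>"
proof -
  assume T: "finite T" "T \<noteq> {}"
  have "pt_dist x T = Min ((\<lambda>y. \<bar>real x - real y\<bar>) ` T)" unfolding pt_dist_def using T by (simp add: cInf_eq_Min)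
  moreover have "Min ((\<lambda>y. \<bar>real x - real y\<bar>) ` T) \<in> (\<lambda>y. \<bar>real x - real y\<bar>) ` T" using T by (intro Min_in) auto
  ultimately show ?thesis by auto
qed

lemma pt_lt1: "finite T \<Longrightarrow> T \<noteq> {} \<Longrightarrow> pt_dist x T < 1 \<Longrightarrow> x \<in> T"
proof -
  assume T: "finite T" "T \<noteq> {}" and lt: "pt_dist x T < 1"
  obtain y where y: "y \<in> T" "pt_dist x T = \<bar>real x - real y\<bar>" using pt_dist_Min[OF T] by blast
  then have "\<bar>real x - real y\<bar> < 1" using lt by simp
  then have "x = y" by linarith
  then show ?thesis using y by simp
qed

lemma mem_pt: "finite T \<Longrightarrow> T \<noteq> {} \<Longrightarrow> x \<in> T \<longleftrightarrow> pt_dist x T = 0"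
proof -
  assume T: "finite T" "T \<noteq> {}"
  show ?thesis
  proof
    assume "x \<in> T" then show "pt_dist x T = 0" by (rule pt_dist_mem)
  next
    assume "pt_dist x T = 0" then show "x \<in> T" using pt_lt1[OF T, of x] by simp
  qed
qed

lemma pt_le_set: "finite S \<Longrightarrow> s \<in> S \<Longrightarrow> pt_dist s T \<le> set_dist S T"
  unfolding set_dist_def by (intro cSup_upper) auto

lemma wa_sub:
  assumes W1: "weak_attractor g A1" and W2: "weak_attractor g A2"
  shows "AE q in noise. A1 q \<subseteq> A2 q"
proof -
  have m1[measurable]: "(\<lambda>q. pt_dist x (A1 q)) \<in> borel_measurable noise" for x using W1 unfolding weak_attractor_def by blast
  have m2[measurable]: "(\<lambda>q. pt_dist x (A2 q)) \<in> borel_measurable noise" for x using W2 unfolding weak_attractor_def by blast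
  have f1: "A1 q \<noteq> {} \<and> finite (A1 q)" if "q \<in> space noise" for q using W1 that unfolding weak_attractor_def by blast
  have f2: "A2 q \<noteq> {} \<and> finite (A2 q)" if "q \<in> space noise" for q using W2 that unfolding weak_attractor_def by blast
  have inv: "AE q in noise. \<forall>n. phi g n q ` A1 q = A1 ((shift ^^ n) q)" using W1 unfolding weak_attractor_def by blast
  have att: "\<And>B e. finite B \<Longrightarrow> e > 0 \<Longrightarrow> (\<forall>n. {q \<in> space noise. set_dist (phi g n q ` B) (A2 ((shift ^^ n) q)) > e} \<in> sets noise)
       \<and> (\<lambda>n. measure noise {q \<in> space noise. set_dist (phi g n q ` B) (A2 ((shift ^^ n) q)) > e}) \<longlonglongrightarrow> 0"
    using W2 unfolding weak_attractor_def by blast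
  define S where "S = {q \<in> space noise. \<not> A1 q \<subseteq> A2 q}"
  have e1: "x \<in> A1 q \<longleftrightarrow> pt_dist x (A1 q) = 0" if "q \<in> space noise" for q x
    using f1[OF that] by (intro mem_pt) auto
  have e2: "x \<in> A2 q \<longleftrightarrow> pt_dist x (A2 q) = 0" if "q \<in> space noise" for q x
    using f2[OF that] by (intro mem_pt) auto
  have S_eq: "S = {q \<in> space noise. \<exists>x. pt_dist x (A1 q) = 0 \<and> pt_dist x (A2 q) \<noteq> 0}"
  proof (intro set_eqI iffI)
    fix q assume "q \<in> S"
    then have qs: "q \<in> space noise" and "\<not> A1 q \<subseteq> A2 q" unfolding S_def by auto
    then obtain x where "x \<in> A1 q" "x \<notin> A2 q" by auto
    then show "q \<in> {q \<in> space noise. \<exists>x. pt_dist x (A1 q) = 0 \<and> pt_dist x (A2 q) \<noteq> 0}"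
      using e1[OF qs, of x] e2[OF qs, of x] qs by auto
  next
    fix q assume "q \<in> {q \<in> space noise. \<exists>x. pt_dist x (A1 q) = 0 \<and> pt_dist x (A2 q) \<noteq> 0}"
    then obtain x where qs: "q \<in> space noise" and x: "pt_dist x (A1 q) = 0" "pt_dist x (A2 q) \<noteq> 0" by auto
    then have "x \<in> A1 q" "x \<notin> A2 q" using e1[OF qs, of x] e2[OF qs, of x] by auto
    then show "q \<in> S" unfolding S_def using qs by auto
  qed
  have Ss[measurable]: "S \<in> sets noise" unfolding S_eq by measurable
  define R where "R N = {q \<in> space noise. \<exists>x. N < x \<and> pt_dist x (A1 q) = 0}" for N :: nat
  have Rs: "R N \<in> sets noise" for N unfolding R_def by measurable
  have R_eq: "q \<in> R N \<longleftrightarrow> q \<in> space noise \<and> \<not> A1 q \<subseteq> {..N}" for q N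
  proof
    assume "q \<in> R N"
    then obtain x where qs: "q \<in> space noise" and x: "N < x" "pt_dist x (A1 q) = 0" unfolding R_def by auto
    then have "x \<in> A1 q" using e1[OF qs, of x] by simp
    then show "q \<in> space noise \<and> \<not> A1 q \<subseteq> {..N}" using qs x by auto
  next
    assume "q \<in> space noise \<and> \<not> A1 q \<subseteq> {..N}"
    then have qs: "q \<in> space noise" and ns: "\<not> A1 q \<subseteq> {..N}" by auto
    from ns obtain x where x: "x \<in> A1 q" "x \<notin> {..N}" by blast
    then have x: "x \<in> A1 q" "N < x" by auto
    then show "q \<in> R N" using e1[OF qs, of x] qs unfolding R_def by auto
  qed
  have decR: "decseq R"
  proof (rule decseq_SucI)
    fix N show "R (Suc N) \<subseteq> R N"
    proof
      fix q assume "q \<in> R (Suc N)"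
      then have qs: "q \<in> space noise" and ns: "\<not> A1 q \<subseteq> {..Suc N}" using R_eq[of q "Suc N"] by auto
      have "\<not> A1 q \<subseteq> {..N}"
      proof
        assume "A1 q \<subseteq> {..N}"
        then have "A1 q \<subseteq> {..Suc N}" by auto
        then show False using ns by simp
      qed
      then show "q \<in> R N" using R_eq[of q N] qs by simp
    qed
  qed
  have Rempty: "(\<Inter>N. R N) = {}"
  proof -
    have "q \<notin> R (Max (A1 q))" if qs: "q \<in> space noise" for q
    proof -
      have "A1 q \<subseteq> {..Max (A1 q)}" using f1[OF qs] by auto
      then show ?thesis using R_eq[of q "Max (A1 q)"] by simp
    qed
    show ?thesis
    proof (rule equals0I)
      fix q assume q: "q \<in> (\<Inter>N. R N)"
      then have "q \<in> R 0" by blast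
      then have qs: "q \<in> space noise" using R_eq[of q 0] by simp
      have "q \<in> R (Max (A1 q))" using q by blast
      then show False using \<open>\<And>q. q \<in> space noise \<Longrightarrow> q \<notin> R (Max (A1 q))\<close>[OF qs] by simp
    qed
  qed
  have "range R \<subseteq> sets noise" using Rs by auto
  then have Rt: "(\<lambda>N. measure noise (R N)) \<longlonglongrightarrow> 0"
    using N.finite_Lim_measure_decseq[OF _ decR] unfolding Rempty by simp
  from inv obtain Ni where Ni: "{q \<in> space noise. \<not> (\<forall>n. phi g n q ` A1 q = A1 ((shift ^^ n) q))} \<subseteq> Ni"
    "emeasure noise Ni = 0" "Ni \<in> sets noise" by (rule AE_E)
  define E where "E N n = {q \<in> space noise. set_dist (phi g n q ` {..N}) (A2 ((shift ^^ n) q)) > 1/2}" for N n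
  have Es: "E N n \<in> sets noise" for N n unfolding E_def using att[of "{..N}" "1/2"] by auto
  have Et: "(\<lambda>n. measure noise (E N n)) \<longlonglongrightarrow> 0" for N unfolding E_def using att[of "{..N}" "1/2"] by auto
  have key: "measure noise S \<le> measure noise (R N) + measure noise (E N n)" for N n
  proof -
    have "measure noise S = measure noise ((shift ^^ n) -` S \<inter> space noise)" by (rule measure_shiftn[OF Ss, symmetric])
    also have "\<dots> \<le> measure noise (R N \<union> Ni \<union> E N n)"
    proof (intro N.finite_measure_mono)
      show "(shift ^^ n) -` S \<inter> space noise \<subseteq> R N \<union> Ni \<union> E N n"
      proof
        fix q assume q: "q \<in> (shift ^^ n) -` S \<inter> space noise"
        then have qs: "q \<in> space noise" and qS: "\<not> A1 ((shift ^^ n) q) \<subseteq> A2 ((shift ^^ n) q)" unfolding S_def by auto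
        have qns: "(shift ^^ n) q \<in> space noise" using shiftn_space[OF qs] .
        show "q \<in> R N \<union> Ni \<union> E N n"
        proof (rule ccontr)
          assume "q \<notin> R N \<union> Ni \<union> E N n"
          then have nR: "A1 q \<subseteq> {..N}" and nNi: "phi g n q ` A1 q = A1 ((shift ^^ n) q)" and nE: "\<not> set_dist (phi g n q ` {..N}) (A2 ((shift ^^ n) q)) > 1/2"
            using R_eq[of q N] qs Ni(1) unfolding E_def by auto
          have "A1 ((shift ^^ n) q) \<subseteq> A2 ((shift ^^ n) q)"
          proof
            fix y assume "y \<in> A1 ((shift ^^ n) q)"
            then obtain x where x: "x \<in> A1 q" "y = phi g n q x" using nNi by auto
            then have "y \<in> phi g n q ` {..N}" using nR by auto
            then have "pt_dist y (A2 ((shift ^^ n) q)) \<le> set_dist (phi g n q ` {..N}) (A2 ((shift ^^ n) q))"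
              by (intro pt_le_set) auto
            then have "pt_dist y (A2 ((shift ^^ n) q)) < 1" using nE by linarith
            then show "y \<in> A2 ((shift ^^ n) q)" using f2[OF qns] pt_lt1 by blast
          qed
          then show False using qS by simp
        qed
      qed
    qed (use Rs Ni(3) Es in auto)
    also have "\<dots> \<le> measure noise (R N \<union> Ni) + measure noise (E N n)"
      using Rs Ni(3) Es by (intro measure_Un_le) auto
    also have "measure noise (R N \<union> Ni) \<le> measure noise (R N) + measure noise Ni"
      using Rs Ni(3) by (intro measure_Un_le) auto
    also have "measure noise Ni = 0" using Ni(2) by (simp add: N.emeasure_eq_measure)
    finally show ?thesis by simp
  qed
  have "measure noise S \<le> 0"
  proof (rule ccontr)
    assume "\<not> measure noise S \<le> 0"
    then have d: "measure noise S > 0" by simp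
    obtain N where N: "measure noise (R N) < measure noise S / 2"
      using order_tendstoD(2)[OF Rt, of "measure noise S / 2"] d by (auto simp: eventually_sequentially)
    obtain n where n: "measure noise (E N n) < measure noise S / 2"
      using order_tendstoD(2)[OF Et[of N], of "measure noise S / 2"] d by (auto simp: eventually_sequentially)
    show False using key[of N n] N n by linarith
  qed
  then have "measure noise S = 0" using measure_nonneg[of noise S] by linarith
  then have "S \<in> null_sets noise" using Ss by (simp add: N.emeasure_eq_measure null_sets_def)
  then show ?thesis by (rule AE_I') (auto simp: S_def)
qed

context schl begin

lemma miss_sets: "{q \<in> space noise. phi g n q x \<notin> AA ((shift ^^ n) q)} \<in> sets noise"
proof -
  have "Measurable.pred noise (\<lambda>q. (\<lambda>y q. y \<notin> AA ((shift ^^ n) q)) (phi g n q x) q)"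
  proof (rule measurable_compose_countable[OF _ phi_meas])
    fix y show "Measurable.pred noise (\<lambda>q. y \<notin> AA ((shift ^^ n) q))"
      using measurable_compose[OF shiftn_meas AA_mem_meas[of y]] by (simp add: pred_def)
  qed
  then show ?thesis by (simp add: pred_def)
qed

lemma AA_weak: "weak_attractor g AA"
  unfolding weak_attractor_def
proof (intro conjI allI ballI impI)
  fix x show "(\<lambda>q. pt_dist x (AA q)) \<in> borel_measurable noise" by (rule pt_dist_AA_meas)
next
  fix q show "AA q \<noteq> {}" "finite (AA q)" unfolding AA_def by auto
next
  show "AE q in noise. \<forall>n. phi g n q ` AA q = AA ((shift ^^ n) q)"
  proof (rule AE_mp[OF GG_AE AE_I2], intro impI allI)
    fix q n assume "GG q"
    then show "phi g n q ` AA q = AA ((shift ^^ n) q)" by (rule AA_inv)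
  qed
next
  fix B :: "nat set" and e :: real assume B: "finite B" and e: "e > 0"
  define F where "F n = {q \<in> space noise. set_dist (phi g n q ` B) (AA ((shift ^^ n) q)) > e}" for n
  have sd: "set_dist (phi g n q ` B) T > e \<longleftrightarrow> (\<exists>x\<in>B. pt_dist (phi g n q x) T > e)" for n q T
  proof -
    have "set_dist (phi g n q ` B) T > e \<longleftrightarrow> (\<exists>s\<in>phi g n q ` B. pt_dist s T > e)"
      by (rule set_dist_gt[OF finite_imageI[OF B] e])
    also have "\<dots> \<longleftrightarrow> (\<exists>x\<in>B. pt_dist (phi g n q x) T > e)" by blast
    finally show ?thesis .
  qed
  have F_eq: "F n = (\<Union>x\<in>B. {q \<in> space noise. pt_dist (phi g n q x) (AA ((shift ^^ n) q)) > e})" for n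
    unfolding F_def sd by blast
  have px: "{q \<in> space noise. pt_dist (phi g n q x) (AA ((shift ^^ n) q)) > e} \<in> sets noise" for n x
  proof -
    have "(\<lambda>q. pt_dist (phi g n q x) (AA ((shift ^^ n) q))) -` {e<..} \<inter> space noise \<in> sets noise"
      by (rule measurable_sets[OF pt_dist_phi_meas]) simp
    moreover have "(\<lambda>q. pt_dist (phi g n q x) (AA ((shift ^^ n) q))) -` {e<..} \<inter> space noise
       = {q \<in> space noise. pt_dist (phi g n q x) (AA ((shift ^^ n) q)) > e}" by auto
    ultimately show ?thesis by simp
  qed
  have Fs: "F n \<in> sets noise" for n unfolding F_eq using B px by (intro sets.finite_UN) 
  then show "{q \<in> space noise. set_dist (phi g n q ` B) (AA ((shift ^^ n) q)) > e} \<in> sets noise" for n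
    unfolding F_def .
  have bound: "measure noise (F n) \<le> (\<Sum>x\<in>B. measure noise {q \<in> space noise. phi g n q x \<notin> AA ((shift ^^ n) q)})" for n
  proof -
    have "F n \<subseteq> (\<Union>x\<in>B. {q \<in> space noise. phi g n q x \<notin> AA ((shift ^^ n) q)})"
    proof
      fix q assume "q \<in> F n"
      then obtain x where x: "x \<in> B" "q \<in> space noise" "pt_dist (phi g n q x) (AA ((shift ^^ n) q)) > e"
        unfolding F_eq by blast
      have "phi g n q x \<notin> AA ((shift ^^ n) q)"
      proof
        assume "phi g n q x \<in> AA ((shift ^^ n) q)"
        then have "pt_dist (phi g n q x) (AA ((shift ^^ n) q)) = 0" by (rule pt_dist_mem)
        then show False using x(3) e by simp
      qed
      then show "q \<in> (\<Union>x\<in>B. {q \<in> space noise. phi g n q x \<notin> AA ((shift ^^ n) q)})" using x by blast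
    qed
    moreover have "(\<Union>x\<in>B. {q \<in> space noise. phi g n q x \<notin> AA ((shift ^^ n) q)}) \<in> sets noise"
      using B miss_sets by (intro sets.finite_UN)
    ultimately have "measure noise (F n) \<le> measure noise (\<Union>x\<in>B. {q \<in> space noise. phi g n q x \<notin> AA ((shift ^^ n) q)})"
      by (rule N.finite_measure_mono)
    also have "\<dots> \<le> (\<Sum>x\<in>B. measure noise {q \<in> space noise. phi g n q x \<notin> AA ((shift ^^ n) q)})"
      using B miss_sets by (intro measure_UNION_le)
    finally show ?thesis .
  qed
  have "(\<lambda>n. \<Sum>x\<in>B. measure noise {q \<in> space noise. phi g n q x \<notin> AA ((shift ^^ n) q)}) \<longlonglongrightarrow> (\<Sum>x\<in>B. 0)"
    by (rule tendsto_sum) (rule miss_tendsto)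
  then have "(\<lambda>n. \<Sum>x\<in>B. measure noise {q \<in> space noise. phi g n q x \<notin> AA ((shift ^^ n) q)}) \<longlonglongrightarrow> 0"
    by simp
  then have "(\<lambda>n. measure noise (F n)) \<longlonglongrightarrow> 0"
    by (rule tendsto_sandwich[rotated 2, OF tendsto_const]) (use bound in \<open>auto intro!: always_eventually\<close>)
  then show "(\<lambda>n. measure noise {q \<in> space noise. set_dist (phi g n q ` B) (AA ((shift ^^ n) q)) > e}) \<longlonglongrightarrow> 0"
    unfolding F_def .
qed

end

theorem proposition4p12:
  fixes g :: "nat \<Rightarrow> real"
  assumes "g 1 > 0" and "g 2 > 0" and "g 3 > 0" and "g 4 > 0"
  shows "(\<exists>!p :: nat pmf. stationary g p)
       \<and> (\<exists>A. weak_attractor g A \<and>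
              (\<forall>A'. weak_attractor g A' \<longrightarrow> (AE q in noise. A' q = A q)))"
proof -
  interpret schl g using assms by unfold_locales
  have "\<forall>A'. weak_attractor g A' \<longrightarrow> (AE q in noise. A' q = AA q)"
  proof (intro allI impI)
    fix A' assume W: "weak_attractor g A'"
    have "AE q in noise. A' q \<subseteq> AA q" by (rule wa_sub[OF W AA_weak])
    moreover have "AE q in noise. AA q \<subseteq> A' q" by (rule wa_sub[OF AA_weak W])
    ultimately show "AE q in noise. A' q = AA q" by eventually_elim auto
  qed
  then have "weak_attractor g AA \<and> (\<forall>A'. weak_attractor g A' \<longrightarrow> (AE q in noise. A' q = AA q))"
    using AA_weak by simp
  then have "\<exists>A. weak_attractor g A \<and> (\<forall>A'. weak_attractor g A' \<longrightarrow> (AE q in noise. A' q = A q))"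
    by (rule exI[of _ AA])
  with part1 show ?thesis by (rule conjI)
qed


end
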